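(* Let $L$ be a finite-dimensional Lie superalgebra over a field of characteristic different from $2,3$, let $0\to R\to F\xrightarrow{\pi} L\to 0$ be a free presentation of $L$, and let $(T,\lambda)$ be a universal element of $C(L)$. Then $T$ is isoclinic to $F/[F,R]$.
   Context: Lie superalgebras: $\mathbb{Z}_2$-graded algebras with graded skew-symmetric bracket satisfying the graded Jacobi identity; homomorphisms are even. A free presentation of $L$ is a free Lie superalgebra $F$ on a $\mathbb{Z}_2$-graded set together with a surjective homomorphism $\pi:F\to L$, with $R=\mathrm{Ker}(\pi)$. $C(L)$ is the class of pairs $(K,\lambda)$ with $\lambda:K\to L$ a surjective homomorphism and $\mathrm{Ker}(\lambda)\subseteq [K,K]\cap Z(K)$; $(T,\sigma)\in C(L)$ is universal if for every $(K,\lambda)\in C(L)$ there is a homomorphism $\tau:T\to K$ with $\lambda\circ\tau=\sigma$. Two Lie superalgebras $A,B$ are isoclinic if there are isomorphisms $\varphi:A/Z(A)\to B/Z(B)$, $\theta:A'\to B'$ ($A'=[A,A]$) with $\theta([a,b])=[c,d]$ whenever $c+Z(B)=\varphi(a+Z(A))$ and $d+Z(B)=\varphi(b+Z(A))$. *)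

theory Defs
  imports Main "HOL-Library.Tree"
begin

record ('a, 'k) lsa =
  lcarrier :: "'a set"
  leven :: "'a set"
  lodd :: "'a set"
  lzero :: 'a
  ladd :: "'a \<Rightarrow> 'a \<Rightarrow> 'a"
  lsmul :: "'k \<Rightarrow> 'a \<Rightarrow> 'a"
  lbr :: "'a \<Rightarrow> 'a \<Rightarrow> 'a"

definition vspace :: "('a, 'k::field) lsa \<Rightarrow> bool" where
  "vspace A \<longleftrightarrow>
     lzero A \<in> lcarrier A \<and>
     (\<forall>x\<in>lcarrier A. \<forall>y\<in>lcarrier A. ladd A x y \<in> lcarrier A) \<and>
     (\<forall>c. \<forall>x\<in>lcarrier A. lsmul A c x \<in> lcarrier A) \<and>
     (\<forall>x\<in>lcarrier A. \<forall>y\<in>lcarrier A. \<forall>z\<in>lcarrier A.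
        ladd A (ladd A x y) z = ladd A x (ladd A y z)) \<and>
     (\<forall>x\<in>lcarrier A. \<forall>y\<in>lcarrier A. ladd A x y = ladd A y x) \<and>
     (\<forall>x\<in>lcarrier A. ladd A (lzero A) x = x) \<and>
     (\<forall>x\<in>lcarrier A. ladd A x (lsmul A (-1) x) = lzero A) \<and>
     (\<forall>x\<in>lcarrier A. lsmul A 1 x = x) \<and>
     (\<forall>a b. \<forall>x\<in>lcarrier A. lsmul A a (lsmul A b x) = lsmul A (a * b) x) \<and>
     (\<forall>a b. \<forall>x\<in>lcarrier A. lsmul A (a + b) x = ladd A (lsmul A a x) (lsmul A b x)) \<and>
     (\<forall>a. \<forall>x\<in>lcarrier A. \<forall>y\<in>lcarrier A.
        lsmul A a (ladd A x y) = ladd A (lsmul A a x) (lsmul A a y))"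

definition subspace :: "('a, 'k::field) lsa \<Rightarrow> 'a set \<Rightarrow> bool" where
  "subspace A V \<longleftrightarrow> V \<subseteq> lcarrier A \<and> lzero A \<in> V \<and>
     (\<forall>x\<in>V. \<forall>y\<in>V. ladd A x y \<in> V) \<and> (\<forall>c. \<forall>x\<in>V. lsmul A c x \<in> V)"

definition homog :: "('a, 'k) lsa \<Rightarrow> bool \<Rightarrow> 'a \<Rightarrow> bool" where
  "homog A d x \<longleftrightarrow> x \<in> (if d then lodd A else leven A)"

definition gsign :: "bool \<Rightarrow> bool \<Rightarrow> 'k::field" where
  "gsign d e = (if d \<and> e then -1 else 1)"

definition lie_superalgebra :: "('a, 'k::field) lsa \<Rightarrow> bool" where
  "lie_superalgebra A \<longleftrightarrow>
     vspace A \<and> subspace A (leven A) \<and> subspace A (lodd A) \<and>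
     leven A \<inter> lodd A = {lzero A} \<and>
     (\<forall>x\<in>lcarrier A. \<exists>e\<in>leven A. \<exists>u\<in>lodd A. x = ladd A e u) \<and>
     (\<forall>x\<in>lcarrier A. \<forall>y\<in>lcarrier A. lbr A x y \<in> lcarrier A) \<and>
     (\<forall>x\<in>lcarrier A. \<forall>y\<in>lcarrier A. \<forall>z\<in>lcarrier A.
        lbr A (ladd A x y) z = ladd A (lbr A x z) (lbr A y z) \<and>
        lbr A z (ladd A x y) = ladd A (lbr A z x) (lbr A z y)) \<and>
     (\<forall>c. \<forall>x\<in>lcarrier A. \<forall>y\<in>lcarrier A.
        lbr A (lsmul A c x) y = lsmul A c (lbr A x y) \<and>
        lbr A x (lsmul A c y) = lsmul A c (lbr A x y)) \<and>
     (\<forall>d e x y. homog A d x \<longrightarrow> homog A e y \<longrightarrow> homog A (d \<noteq> e) (lbr A x y)) \<and>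
     (\<forall>d e x y. homog A d x \<longrightarrow> homog A e y \<longrightarrow>
        lbr A x y = lsmul A (- gsign d e) (lbr A y x)) \<and>
     (\<forall>d e f x y z. homog A d x \<longrightarrow> homog A e y \<longrightarrow> homog A f z \<longrightarrow>
        ladd A (ladd A (lsmul A (gsign d f) (lbr A x (lbr A y z)))
                        (lsmul A (gsign e d) (lbr A y (lbr A z x))))
               (lsmul A (gsign f e) (lbr A z (lbr A x y))) = lzero A)"

definition lhom :: "('a, 'k) lsa \<Rightarrow> ('b, 'k) lsa \<Rightarrow> ('a \<Rightarrow> 'b) \<Rightarrow> bool" where
  "lhom A B h \<longleftrightarrow> h ` lcarrier A \<subseteq> lcarrier B \<and>
     h ` leven A \<subseteq> leven B \<and> h ` lodd A \<subseteq> lodd B \<and>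
     (\<forall>x\<in>lcarrier A. \<forall>y\<in>lcarrier A. h (ladd A x y) = ladd B (h x) (h y)) \<and>
     (\<forall>c. \<forall>x\<in>lcarrier A. h (lsmul A c x) = lsmul B c (h x)) \<and>
     (\<forall>x\<in>lcarrier A. \<forall>y\<in>lcarrier A. h (lbr A x y) = lbr B (h x) (h y))"

definition liso :: "('a, 'k) lsa \<Rightarrow> ('b, 'k) lsa \<Rightarrow> ('a \<Rightarrow> 'b) \<Rightarrow> bool" where
  "liso A B h \<longleftrightarrow> lhom A B h \<and> bij_betw h (lcarrier A) (lcarrier B)"

definition lkernel :: "('a, 'k) lsa \<Rightarrow> ('b, 'k) lsa \<Rightarrow> ('a \<Rightarrow> 'b) \<Rightarrow> 'a set" where
  "lkernel A B h = {x \<in> lcarrier A. h x = lzero B}"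

definition lspan :: "('a, 'k::field) lsa \<Rightarrow> 'a set \<Rightarrow> 'a set" where
  "lspan A S = \<Inter>{V. subspace A V \<and> S \<subseteq> V}"

definition fin_dim :: "('a, 'k::field) lsa \<Rightarrow> bool" where
  "fin_dim A \<longleftrightarrow> (\<exists>S. finite S \<and> S \<subseteq> lcarrier A \<and> lcarrier A \<subseteq> lspan A S)"

definition lgen :: "('a, 'k::field) lsa \<Rightarrow> 'a set \<Rightarrow> 'a set" where
  "lgen A S = \<Inter>{V. subspace A V \<and> S \<subseteq> V \<and> (\<forall>x\<in>V. \<forall>y\<in>V. lbr A x y \<in> V)}"

definition lbrs :: "('a, 'k::field) lsa \<Rightarrow> 'a set \<Rightarrow> 'a set \<Rightarrow> 'a set" where
  "lbrs A U V = lspan A {lbr A u v | u v. u \<in> U \<and> v \<in> V}"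

definition derived :: "('a, 'k::field) lsa \<Rightarrow> 'a set" where
  "derived A = lbrs A (lcarrier A) (lcarrier A)"

definition center :: "('a, 'k) lsa \<Rightarrow> 'a set" where
  "center A = {z \<in> lcarrier A. \<forall>x\<in>lcarrier A. lbr A z x = lzero A}"

definition lrestrict :: "('a, 'k) lsa \<Rightarrow> 'a set \<Rightarrow> ('a, 'k) lsa" where
  "lrestrict A S = A\<lparr>lcarrier := S, leven := leven A \<inter> S, lodd := lodd A \<inter> S\<rparr>"

definition lcoset :: "('a, 'k) lsa \<Rightarrow> 'a set \<Rightarrow> 'a \<Rightarrow> 'a set" where
  "lcoset A I x = {ladd A x i | i. i \<in> I}"

definition rep :: "'a set \<Rightarrow> 'a" where
  "rep X = (SOME x. x \<in> X)"

definition lquot :: "('a, 'k) lsa \<Rightarrow> 'a set \<Rightarrow> ('a set, 'k) lsa" where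
  "lquot A I = \<lparr>lcarrier = lcoset A I ` lcarrier A,
     leven = lcoset A I ` leven A,
     lodd = lcoset A I ` lodd A,
     lzero = lcoset A I (lzero A),
     ladd = (\<lambda>X Y. lcoset A I (ladd A (rep X) (rep Y))),
     lsmul = (\<lambda>c X. lcoset A I (lsmul A c (rep X))),
     lbr = (\<lambda>X Y. lcoset A I (lbr A (rep X) (rep Y)))\<rparr>"

definition isoclinic :: "('a, 'k::field) lsa \<Rightarrow> ('b, 'k) lsa \<Rightarrow> bool" where
  "isoclinic A B \<longleftrightarrow> (\<exists>\<phi> \<theta>.
     liso (lquot A (center A)) (lquot B (center B)) \<phi> \<and>
     liso (lrestrict A (derived A)) (lrestrict B (derived B)) \<theta> \<and>
     (\<forall>a\<in>lcarrier A. \<forall>b\<in>lcarrier A. \<forall>c\<in>lcarrier B. \<forall>d\<in>lcarrier B.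
        \<phi> (lcoset A (center A) a) = lcoset B (center B) c \<longrightarrow>
        \<phi> (lcoset A (center A) b) = lcoset B (center B) d \<longrightarrow>
        \<theta> (lbr A a b) = lbr B c d))"

definition inC :: "('l, 'k::field) lsa \<Rightarrow> ('a, 'k) lsa \<Rightarrow> ('a \<Rightarrow> 'l) \<Rightarrow> bool" where
  "inC L K lam \<longleftrightarrow> lie_superalgebra K \<and> lhom K L lam \<and> lam ` lcarrier K = lcarrier L \<and>
     lkernel K L lam \<subseteq> derived K \<inter> center K"

text \<open>The competitors K range over Lie superalgebras
  whose elements live in the type 'k list; since every member of C(L) is
  finite-dimensional when L is, every member of C(L) is isomorphic
  to one of this type, so this is equivalent to the unrestricted notion.\<close>
definition universal_C :: "('l, 'k::field) lsa \<Rightarrow> ('t, 'k) lsa \<Rightarrow> ('t \<Rightarrow> 'l) \<Rightarrow> bool" where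
  "universal_C L T \<sigma> \<longleftrightarrow> inC L T \<sigma> \<and>
     (\<forall>(K :: ('k list, 'k) lsa) lam. inC L K lam \<longrightarrow>
        (\<exists>\<tau>. lhom T K \<tau> \<and> (\<forall>t\<in>lcarrier T. lam (\<tau> t) = \<sigma> t)))"

text \<open>Targets are taken on the type
  'x option tree \<Rightarrow> 'k, which is large enough to hold a copy of every
  subalgebra generated by the image of X (formal linear combinations of
  bracket words), so this is equivalent to the usual universal property.\<close>
definition free_lsa :: "('f, 'k::field) lsa \<Rightarrow> 'x set \<Rightarrow> 'x set \<Rightarrow> ('x \<Rightarrow> 'f) \<Rightarrow> bool" where
  "free_lsa F X0 X1 \<iota> \<longleftrightarrow> lie_superalgebra F \<and> X0 \<inter> X1 = {} \<and>
     \<iota> ` X0 \<subseteq> leven F \<and> \<iota> ` X1 \<subseteq> lodd F \<and>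
     lcarrier F = lgen F (\<iota> ` (X0 \<union> X1)) \<and>
     (\<forall>(M :: ('x option tree \<Rightarrow> 'k, 'k) lsa) f.
        lie_superalgebra M \<longrightarrow> f ` X0 \<subseteq> leven M \<longrightarrow> f ` X1 \<subseteq> lodd M \<longrightarrow>
        (\<exists>h. lhom F M h \<and> (\<forall>x\<in>X0 \<union> X1. h (\<iota> x) = f x)))"

end

theory Submission
  imports Defs
begin

locale VS =
  fixes A :: "('a, 'k::field) lsa"
  assumes vs: "vspace A"
begin

abbreviation "C \<equiv> lcarrier A"
abbreviation "add \<equiv> ladd A"
abbreviation "sm \<equiv> lsmul A"
abbreviation "zr \<equiv> lzero A"
abbreviation "neg x \<equiv> sm (-1) x"
abbreviation "sub x y \<equiv> add x (neg y)"

lemma zero_closed[simp,intro]: "zr \<in> C" using vs unfolding vspace_def by blast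
lemma add_closed[simp,intro]: "x \<in> C \<Longrightarrow> y \<in> C \<Longrightarrow> add x y \<in> C" using vs unfolding vspace_def by auto
lemma sm_closed[simp,intro]: "x \<in> C \<Longrightarrow> sm c x \<in> C" using vs unfolding vspace_def by blast
lemma add_assoc: "x \<in> C \<Longrightarrow> y \<in> C \<Longrightarrow> z \<in> C \<Longrightarrow> add (add x y) z = add x (add y z)"
  using vs unfolding vspace_def by blast
lemma add_comm: "x \<in> C \<Longrightarrow> y \<in> C \<Longrightarrow> add x y = add y x"
  using vs unfolding vspace_def by blast
lemma add_zero_left[simp]: "x \<in> C \<Longrightarrow> add zr x = x" using vs unfolding vspace_def by blast
lemma add_zero_right[simp]: "x \<in> C \<Longrightarrow> add x zr = x" using add_comm add_zero_left by fastforce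
lemma add_neg[simp]: "x \<in> C \<Longrightarrow> add x (neg x) = zr" using vs unfolding vspace_def by blast
lemma sm_one[simp]: "x \<in> C \<Longrightarrow> sm 1 x = x" using vs unfolding vspace_def by blast
lemma sm_sm[simp]: "x \<in> C \<Longrightarrow> sm a (sm b x) = sm (a*b) x" using vs unfolding vspace_def by blast
lemma sm_add_left: "x \<in> C \<Longrightarrow> sm (a+b) x = add (sm a x) (sm b x)" using vs unfolding vspace_def by blast
lemma sm_add_right: "x \<in> C \<Longrightarrow> y \<in> C \<Longrightarrow> sm a (add x y) = add (sm a x) (sm a y)"
  using vs unfolding vspace_def by blast

lemma add_lcomm: "x \<in> C \<Longrightarrow> y \<in> C \<Longrightarrow> z \<in> C \<Longrightarrow> add x (add y z) = add y (add x z)"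
  by (metis add_assoc add_comm)

lemma neg_add[simp]: "x \<in> C \<Longrightarrow> add (neg x) x = zr" using add_comm add_neg by fastforce

lemma add_cancel_left: assumes "x \<in> C" "y \<in> C" "z \<in> C" "add x y = add x z" shows "y = z"
proof -
  have "add (neg x) (add x y) = add (neg x) (add x z)" by (simp only: assms(4))
  moreover have "add (neg x) (add x y) = y" using assms(1-3) by (simp add: add_assoc[symmetric])
  moreover have "add (neg x) (add x z) = z" using assms(1-3) by (simp add: add_assoc[symmetric])
  ultimately show ?thesis by simp
qed

lemma add_left_cancel_iff[simp]: "x \<in> C \<Longrightarrow> y \<in> C \<Longrightarrow> z \<in> C \<Longrightarrow> add x y = add x z \<longleftrightarrow> y = z"
  using add_cancel_left by blast
lemma add_right_cancel_iff[simp]: "x \<in> C \<Longrightarrow> y \<in> C \<Longrightarrow> z \<in> C \<Longrightarrow> add y x = add z x \<longleftrightarrow> y = z"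
  using add_cancel_left add_comm by metis

lemma sm_zero_left[simp]: assumes "x \<in> C" shows "sm 0 x = zr"
proof -
  have "add (sm 0 x) (sm 0 x) = add (sm 0 x) zr" using sm_add_left[OF assms, of 0 0] assms by simp
  thus ?thesis using assms by (meson add_cancel_left sm_closed zero_closed)
qed

lemma sm_zero_right[simp]: "sm c zr = zr"
proof -
  have "add (sm c zr) (sm c zr) = add (sm c zr) zr" using sm_add_right[of zr zr c] by simp
  thus ?thesis by (meson add_cancel_left sm_closed zero_closed)
qed

lemma add_eq_zero_iff: "x \<in> C \<Longrightarrow> y \<in> C \<Longrightarrow> add x y = zr \<longleftrightarrow> y = neg x"
  by (metis add_cancel_left add_neg sm_closed)

lemma sub_eq_zero_iff[simp]: "x \<in> C \<Longrightarrow> y \<in> C \<Longrightarrow> sub x y = zr \<longleftrightarrow> x = y"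
  by (metis add_eq_zero_iff add_neg neg_add sm_closed add_comm)

lemma neg_neg[simp]: "x \<in> C \<Longrightarrow> neg (neg x) = x" by simp

lemma neg_zero[simp]: "neg zr = zr" by simp

lemma neg_add_distrib: "x \<in> C \<Longrightarrow> y \<in> C \<Longrightarrow> neg (add x y) = add (neg x) (neg y)"
  by (simp add: sm_add_right)

lemma sub_add_cancel[simp]: "x \<in> C \<Longrightarrow> y \<in> C \<Longrightarrow> add (sub x y) y = x"
  by (simp add: add_assoc)
lemma add_sub_cancel[simp]: "x \<in> C \<Longrightarrow> y \<in> C \<Longrightarrow> sub (add x y) y = x"
  by (simp add: add_assoc)
lemma add_sub_cancel2[simp]: "x \<in> C \<Longrightarrow> y \<in> C \<Longrightarrow> add y (sub x y) = x"
  by (metis add_comm sm_closed add_closed sub_add_cancel)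

lemma sm_neg: "x \<in> C \<Longrightarrow> sm c (neg x) = neg (sm c x)" by (simp add: mult.commute)

lemma sm_eq_zero: assumes "x \<in> C" "c \<noteq> 0" "sm c x = zr" shows "x = zr"
proof -
  have "x = sm (inverse c) (sm c x)" using assms(1,2) by simp
  also have "\<dots> = zr" by (simp only: assms(3) sm_zero_right)
  finally show ?thesis .
qed

end


context VS begin

lemma add_4swap: assumes "a \<in> C" "b \<in> C" "c \<in> C" "d \<in> C"
  shows "add (add a b) (add c d) = add (add a c) (add b d)"
proof -
  have "add (add a b) (add c d) = add a (add b (add c d))" using assms by (simp add: add_assoc)
  also have "add b (add c d) = add c (add b d)" using assms by (rule_tac add_lcomm) auto
  also have "add a (add c (add b d)) = add (add a c) (add b d)" using assms by (simp add: add_assoc)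
  finally show ?thesis .
qed

lemma add_eq_swap: assumes "a \<in> C" "b \<in> C" "c \<in> C" "d \<in> C" "add a b = add c d"
  shows "sub a c = sub d b"
proof -
  have "add (sub a c) (add c b) = add (add a c) (add (neg c) b)"
    using add_4swap[of a "neg c" c b] assms(1-4) by simp
  also have "\<dots> = add (add a c) (sub b c)" using assms(1-4) add_comm by simp
  also have "\<dots> = add a b" using assms(1-4) add_4swap[of a c b "neg c"] by simp
  finally have 1: "add (sub a c) (add c b) = add a b" .
  have "add (sub d b) (add c b) = add (add d c) (add (neg b) b)"
    using add_4swap[of d "neg b" c b] assms(1-4) by simp
  also have "\<dots> = add c d" using assms(1-4) add_comm by simp
  finally have 2: "add (sub d b) (add c b) = add c d" .
  have "add (sub a c) (add c b) = add (sub d b) (add c b)" using 1 2 assms(5) by simp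
  thus ?thesis using assms(1-4) add_right_cancel_iff[of "add c b" "sub a c" "sub d b"] by simp
qed

lemma subspace_C: "subspace A C" unfolding subspace_def by auto

lemma subspaceD:
  assumes "subspace A V"
  shows "V \<subseteq> C" "zr \<in> V" "\<And>x y. x \<in> V \<Longrightarrow> y \<in> V \<Longrightarrow> add x y \<in> V" "\<And>c x. x \<in> V \<Longrightarrow> sm c x \<in> V"
  using assms unfolding subspace_def by auto

lemma subspace_sub: "subspace A V \<Longrightarrow> x \<in> V \<Longrightarrow> y \<in> V \<Longrightarrow> sub x y \<in> V"
  using subspaceD by metis

lemma lspan_subspace: assumes "S \<subseteq> C" shows "subspace A (lspan A S)"
proof -
  have "lspan A S \<subseteq> C" unfolding lspan_def using subspace_C assms by blast
  thus ?thesis unfolding subspace_def lspan_def by auto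
qed

lemma lspan_sup: "S \<subseteq> lspan A S" unfolding lspan_def by blast

lemma lspan_least: "subspace A V \<Longrightarrow> S \<subseteq> V \<Longrightarrow> lspan A S \<subseteq> V" unfolding lspan_def by blast

lemma lspan_mono: "S \<subseteq> S' \<Longrightarrow> S' \<subseteq> C \<Longrightarrow> lspan A S \<subseteq> lspan A S'"
  by (meson lspan_least lspan_subspace lspan_sup order_trans)

lemma lspan_in_C: "S \<subseteq> C \<Longrightarrow> lspan A S \<subseteq> C"
  using lspan_subspace subspaceD(1) by blast

lemma lspan_induct[consumes 2, case_names sub gen]:
  assumes "x \<in> lspan A S" "S \<subseteq> C" "subspace A {x \<in> C. P x}" "\<And>s. s \<in> S \<Longrightarrow> P s"
  shows "P x"
proof -
  have "lspan A S \<subseteq> {x \<in> C. P x}" using assms(2-4) by (intro lspan_least) auto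
  thus ?thesis using assms(1) by blast
qed

end

locale LSA = fixes A :: "('a, 'k::field) lsa"
  assumes lsa: "lie_superalgebra A"
begin

lemmas L_vspace = lsa[unfolded lie_superalgebra_def, THEN conjunct1]
lemmas L_subEv = lsa[unfolded lie_superalgebra_def, THEN conjunct2, THEN conjunct1]
lemmas L_subOd = lsa[unfolded lie_superalgebra_def, THEN conjunct2, THEN conjunct2, THEN conjunct1]
lemmas L_EvOd = lsa[unfolded lie_superalgebra_def, THEN conjunct2, THEN conjunct2, THEN conjunct2, THEN conjunct1]
lemmas L_decomp = lsa[unfolded lie_superalgebra_def, THEN conjunct2, THEN conjunct2, THEN conjunct2, THEN conjunct2, THEN conjunct1]
lemmas L_brc = lsa[unfolded lie_superalgebra_def, THEN conjunct2, THEN conjunct2, THEN conjunct2, THEN conjunct2, THEN conjunct2, THEN conjunct1]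
lemmas L_bradd = lsa[unfolded lie_superalgebra_def, THEN conjunct2, THEN conjunct2, THEN conjunct2, THEN conjunct2, THEN conjunct2, THEN conjunct2, THEN conjunct1]
lemmas L_brsm = lsa[unfolded lie_superalgebra_def, THEN conjunct2, THEN conjunct2, THEN conjunct2, THEN conjunct2, THEN conjunct2, THEN conjunct2, THEN conjunct2, THEN conjunct1]
lemmas L_parity = lsa[unfolded lie_superalgebra_def, THEN conjunct2, THEN conjunct2, THEN conjunct2, THEN conjunct2, THEN conjunct2, THEN conjunct2, THEN conjunct2, THEN conjunct2, THEN conjunct1]
lemmas L_skew = lsa[unfolded lie_superalgebra_def, THEN conjunct2, THEN conjunct2, THEN conjunct2, THEN conjunct2, THEN conjunct2, THEN conjunct2, THEN conjunct2, THEN conjunct2, THEN conjunct2, THEN conjunct1]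
lemmas L_jacobi = lsa[unfolded lie_superalgebra_def, THEN conjunct2, THEN conjunct2, THEN conjunct2, THEN conjunct2, THEN conjunct2, THEN conjunct2, THEN conjunct2, THEN conjunct2, THEN conjunct2, THEN conjunct2]

sublocale VS A using L_vspace by unfold_locales

abbreviation "Ev \<equiv> leven A"
abbreviation "Od \<equiv> lodd A"
abbreviation "br \<equiv> lbr A"

lemma sub_Ev: "subspace A Ev" by (rule L_subEv)
lemma sub_Od: "subspace A Od" by (rule L_subOd)
lemma Ev_C: "x \<in> Ev \<Longrightarrow> x \<in> C" using subspaceD[OF sub_Ev] by blast
lemma Od_C: "x \<in> Od \<Longrightarrow> x \<in> C" using subspaceD[OF sub_Od] by blast
lemma Ev_Od: "Ev \<inter> Od = {zr}" by (rule L_EvOd)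
lemma zr_Ev[simp,intro]: "zr \<in> Ev" using subspaceD[OF sub_Ev] by blast
lemma zr_Od[simp,intro]: "zr \<in> Od" using subspaceD[OF sub_Od] by blast
lemma Ev_add: "x \<in> Ev \<Longrightarrow> y \<in> Ev \<Longrightarrow> add x y \<in> Ev" using subspaceD[OF sub_Ev] by blast
lemma Od_add: "x \<in> Od \<Longrightarrow> y \<in> Od \<Longrightarrow> add x y \<in> Od" using subspaceD[OF sub_Od] by blast
lemma Ev_sm: "x \<in> Ev \<Longrightarrow> sm c x \<in> Ev" using subspaceD[OF sub_Ev] by blast
lemma Od_sm: "x \<in> Od \<Longrightarrow> sm c x \<in> Od" using subspaceD[OF sub_Od] by blast
lemma Ev_Od_zero: "x \<in> Ev \<Longrightarrow> x \<in> Od \<Longrightarrow> x = zr" using Ev_Od by blast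

lemma decomp: "x \<in> C \<Longrightarrow> \<exists>e\<in>Ev. \<exists>u\<in>Od. x = add e u"
  using L_decomp by blast

lemma decomp_unique:
  assumes "e1 \<in> Ev" "e2 \<in> Ev" "u1 \<in> Od" "u2 \<in> Od" "add e1 u1 = add e2 u2"
  shows "e1 = e2 \<and> u1 = u2"
proof -
  have "sub e1 e2 = sub u2 u1"
    using add_eq_swap[OF Ev_C[OF assms(1)] Od_C[OF assms(3)] Ev_C[OF assms(2)] Od_C[OF assms(4)] assms(5)] .
  moreover have "sub e1 e2 \<in> Ev" using assms by (simp add: Ev_add Ev_sm)
  moreover have "sub u2 u1 \<in> Od" using assms by (simp add: Od_add Od_sm)
  ultimately have "sub e1 e2 = zr" "sub u2 u1 = zr" using Ev_Od_zero by metis+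
  thus ?thesis using sub_eq_zero_iff Ev_C Od_C assms(1-4) by metis
qed

lemma br_closed[simp,intro]: "x \<in> C \<Longrightarrow> y \<in> C \<Longrightarrow> br x y \<in> C"
  using L_brc by blast
lemma br_add_left: "x \<in> C \<Longrightarrow> y \<in> C \<Longrightarrow> z \<in> C \<Longrightarrow> br (add x y) z = add (br x z) (br y z)"
  using L_bradd by blast
lemma br_add_right: "x \<in> C \<Longrightarrow> y \<in> C \<Longrightarrow> z \<in> C \<Longrightarrow> br z (add x y) = add (br z x) (br z y)"
  using L_bradd by blast
lemma br_sm_left: "x \<in> C \<Longrightarrow> y \<in> C \<Longrightarrow> br (sm c x) y = sm c (br x y)"
  using L_brsm by blast
lemma br_sm_right: "x \<in> C \<Longrightarrow> y \<in> C \<Longrightarrow> br x (sm c y) = sm c (br x y)"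
  using L_brsm by blast
lemma br_zero_left[simp]: "x \<in> C \<Longrightarrow> br zr x = zr"
  using br_sm_left[of zr x 0] by simp
lemma br_zero_right[simp]: "x \<in> C \<Longrightarrow> br x zr = zr"
  using br_sm_right[of x zr 0] by simp

lemma br_parity: "homog A d x \<Longrightarrow> homog A e y \<Longrightarrow> homog A (d \<noteq> e) (br x y)"
  using L_parity by blast
lemma br_skew: "homog A d x \<Longrightarrow> homog A e y \<Longrightarrow> br x y = sm (- gsign d e) (br y x)"
  using L_skew by blast

lemma br_EE: "x \<in> Ev \<Longrightarrow> y \<in> Ev \<Longrightarrow> br x y \<in> Ev" using br_parity[of False x False y] by (simp add: homog_def)
lemma br_EO: "x \<in> Ev \<Longrightarrow> y \<in> Od \<Longrightarrow> br x y \<in> Od" using br_parity[of False x True y] by (simp add: homog_def)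
lemma br_OE: "x \<in> Od \<Longrightarrow> y \<in> Ev \<Longrightarrow> br x y \<in> Od" using br_parity[of True x False y] by (simp add: homog_def)
lemma br_OO: "x \<in> Od \<Longrightarrow> y \<in> Od \<Longrightarrow> br x y \<in> Ev" using br_parity[of True x True y] by (simp add: homog_def)

lemma homog_C: "homog A d x \<Longrightarrow> x \<in> C" unfolding homog_def using Ev_C Od_C by (cases d) auto

lemma skew_ex: "homog A d x \<Longrightarrow> homog A e y \<Longrightarrow> \<exists>c. br x y = sm c (br y x)"
  using br_skew by blast

lemma br_neg_left: "x \<in> C \<Longrightarrow> y \<in> C \<Longrightarrow> br (neg x) y = neg (br x y)" by (simp add: br_sm_left)
lemma br_neg_right: "x \<in> C \<Longrightarrow> y \<in> C \<Longrightarrow> br x (neg y) = neg (br x y)" by (simp add: br_sm_right)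
lemma br_sub_left: "x \<in> C \<Longrightarrow> y \<in> C \<Longrightarrow> z \<in> C \<Longrightarrow> br (sub x y) z = sub (br x z) (br y z)"
  by (simp add: br_add_left br_neg_left)
lemma br_sub_right: "x \<in> C \<Longrightarrow> y \<in> C \<Longrightarrow> z \<in> C \<Longrightarrow> br z (sub x y) = sub (br z x) (br z y)"
  by (simp add: br_add_right br_neg_right)

definition "graded V \<longleftrightarrow> (\<forall>x\<in>V. \<exists>e\<in>V \<inter> Ev. \<exists>u\<in>V \<inter> Od. x = add e u)"

lemma graded_parts:
  assumes "graded V" "x \<in> V" "e \<in> Ev" "u \<in> Od" "x = add e u"
  shows "e \<in> V" "u \<in> V"
proof -
  obtain e' u' where h: "e' \<in> V" "e' \<in> Ev" "u' \<in> V" "u' \<in> Od" "x = add e' u'"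
    using assms unfolding graded_def by blast
  have "add e u = add e' u'" using assms(5) h(5) by simp
  then have "e = e' \<and> u = u'" using decomp_unique[OF assms(3) h(2) assms(4) h(4)] by blast
  thus "e \<in> V" "u \<in> V" using h by auto
qed

lemma graded_C: "graded C" unfolding graded_def
proof
  fix x assume "x \<in> C"
  then obtain e u where "e \<in> Ev" "u \<in> Od" "x = add e u" using decomp by blast
  thus "\<exists>e\<in>C \<inter> Ev. \<exists>u\<in>C \<inter> Od. x = add e u" using Ev_C Od_C by blast
qed

lemma lspan_graded:
  assumes "S \<subseteq> C" "\<And>s. s \<in> S \<Longrightarrow> \<exists>e\<in>lspan A S \<inter> Ev. \<exists>u\<in>lspan A S \<inter> Od. s = add e u"
  shows "graded (lspan A S)"
proof -
  let ?V = "lspan A S"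
  have sV: "subspace A ?V" using lspan_subspace assms by blast
  have "\<exists>e\<in>?V \<inter> Ev. \<exists>u\<in>?V \<inter> Od. x = add e u" if "x \<in> ?V" for x
    using that assms(1)
  proof (induction rule: lspan_induct)
    case sub
    show ?case unfolding subspace_def
    proof (intro conjI ballI allI)
      show "{x \<in> C. \<exists>e\<in>?V \<inter> Ev. \<exists>u\<in>?V \<inter> Od. x = add e u} \<subseteq> C" by blast
      show "zr \<in> {x \<in> C. \<exists>e\<in>?V \<inter> Ev. \<exists>u\<in>?V \<inter> Od. x = add e u}"
        using subspaceD(2)[OF sV] by force
    next
      fix x y assume "x \<in> {x \<in> C. \<exists>e\<in>?V \<inter> Ev. \<exists>u\<in>?V \<inter> Od. x = add e u}"
        "y \<in> {x \<in> C. \<exists>e\<in>?V \<inter> Ev. \<exists>u\<in>?V \<inter> Od. x = add e u}"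
      then obtain e u e' u' where h: "e \<in> ?V \<inter> Ev" "u \<in> ?V \<inter> Od" "x = add e u"
        "e' \<in> ?V \<inter> Ev" "u' \<in> ?V \<inter> Od" "y = add e' u'" by blast
      have "add x y = add (add e e') (add u u')" using h Ev_C Od_C add_4swap by simp
      moreover have "add e e' \<in> ?V \<inter> Ev" "add u u' \<in> ?V \<inter> Od" using h subspaceD(3)[OF sV] Ev_add Od_add by auto
      ultimately show "add x y \<in> {x \<in> C. \<exists>e\<in>?V \<inter> Ev. \<exists>u\<in>?V \<inter> Od. x = add e u}"
        using h Ev_C Od_C by blast
    next
      fix c x assume "x \<in> {x \<in> C. \<exists>e\<in>?V \<inter> Ev. \<exists>u\<in>?V \<inter> Od. x = add e u}"
      then obtain e u where h: "e \<in> ?V \<inter> Ev" "u \<in> ?V \<inter> Od" "x = add e u" by blast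
      have "sm c x = add (sm c e) (sm c u)" using h Ev_C Od_C sm_add_right by blast
      moreover have "sm c e \<in> ?V \<inter> Ev" "sm c u \<in> ?V \<inter> Od" using h subspaceD(4)[OF sV] Ev_sm Od_sm by auto
      ultimately show "sm c x \<in> {x \<in> C. \<exists>e\<in>?V \<inter> Ev. \<exists>u\<in>?V \<inter> Od. x = add e u}"
        using h Ev_C Od_C by blast
    qed
  next
    case (gen s) thus ?case using assms(2) by blast
  qed
  thus ?thesis unfolding graded_def by blast
qed

end

context LSA begin

lemma homog_Ev: "x \<in> Ev \<Longrightarrow> homog A False x" by (simp add: homog_def)
lemma homog_Od: "x \<in> Od \<Longrightarrow> homog A True x" by (simp add: homog_def)

lemma skew_EvEv: "x \<in> Ev \<Longrightarrow> y \<in> Ev \<Longrightarrow> \<exists>c. br x y = sm c (br y x)" using skew_ex homog_Ev by blast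
lemma skew_EvOd: "x \<in> Ev \<Longrightarrow> y \<in> Od \<Longrightarrow> \<exists>c. br x y = sm c (br y x)" using skew_ex homog_Ev homog_Od by blast
lemma skew_OdEv: "x \<in> Od \<Longrightarrow> y \<in> Ev \<Longrightarrow> \<exists>c. br x y = sm c (br y x)" using skew_ex homog_Ev homog_Od by blast
lemma skew_OdOd: "x \<in> Od \<Longrightarrow> y \<in> Od \<Longrightarrow> \<exists>c. br x y = sm c (br y x)" using skew_ex homog_Od by blast

lemma br_decomp4:
  assumes "xe \<in> Ev" "xo \<in> Od" "ye \<in> Ev" "yo \<in> Od"
  shows "br (add xe xo) (add ye yo) = add (add (br xe ye) (br xo yo)) (add (br xe yo) (br xo ye))"
proof -
  have C: "xe \<in> C" "xo \<in> C" "ye \<in> C" "yo \<in> C" using assms Ev_C Od_C by auto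
  have "br (add xe xo) (add ye yo) = add (add (br xe ye) (br xo ye)) (add (br xe yo) (br xo yo))"
    using C by (simp add: br_add_left br_add_right)
  also have "\<dots> = add (add (br xe ye) (br xo yo)) (add (br xe yo) (br xo ye))"
  proof -
    have "add (add (br xe ye) (br xo ye)) (add (br xe yo) (br xo yo)) =
          add (add (br xe ye) (br xo ye)) (add (br xo yo) (br xe yo))" using C add_comm[of "br xe yo" "br xo yo"] by simp
    also have "\<dots> = add (add (br xe ye) (br xo yo)) (add (br xo ye) (br xe yo))"
      by (rule add_4swap) (auto simp: C)
    also have "add (br xo ye) (br xe yo) = add (br xe yo) (br xo ye)" using C add_comm[of "br xo ye" "br xe yo"] by simp
    finally show ?thesis .
  qed
  finally show ?thesis .
qed

definition "ideal I \<longleftrightarrow> subspace A I \<and> graded I \<and> (\<forall>x\<in>C. \<forall>i\<in>I. br x i \<in> I \<and> br i x \<in> I)"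

lemma right_from_left:
  assumes sV: "subspace A V" and gV: "graded V" and l: "\<And>x v. x \<in> C \<Longrightarrow> v \<in> V \<Longrightarrow> br x v \<in> V"
    and "v \<in> V" "x \<in> C"
  shows "br v x \<in> V"
proof -
  obtain ve vo where v: "ve \<in> V" "ve \<in> Ev" "vo \<in> V" "vo \<in> Od" "v = add ve vo"
    using gV \<open>v \<in> V\<close> unfolding graded_def by blast
  obtain xe xo where x: "xe \<in> Ev" "xo \<in> Od" "x = add xe xo" using decomp \<open>x \<in> C\<close> by blast
  have VC: "\<And>y. y \<in> V \<Longrightarrow> y \<in> C" using subspaceD(1)[OF sV] by blast
  have h: "br a b \<in> V" if "a \<in> V" "b \<in> C" "br a b = sm c (br b a)" for a b c
  proof -
    have "br b a \<in> V" using l[OF that(2,1)] .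
    hence "sm c (br b a) \<in> V" by (rule subspaceD(4)[OF sV])
    thus ?thesis using that(3) by simp
  qed
  have 1: "br ve xe \<in> V" using skew_EvEv[OF v(2) x(1)] h v(1) Ev_C[OF x(1)] by blast
  have 2: "br vo xo \<in> V" using skew_OdOd[OF v(4) x(2)] h v(3) Od_C[OF x(2)] by blast
  have 3: "br ve xo \<in> V" using skew_EvOd[OF v(2) x(2)] h v(1) Od_C[OF x(2)] by blast
  have 4: "br vo xe \<in> V" using skew_OdEv[OF v(4) x(1)] h v(3) Ev_C[OF x(1)] by blast
  have "br v x = add (add (br ve xe) (br vo xo)) (add (br ve xo) (br vo xe))"
    using br_decomp4 v x by simp
  thus ?thesis using 1 2 3 4 subspaceD(3)[OF sV] by metis
qed

lemma idealI:
  assumes "subspace A V" "graded V" "\<And>x v. x \<in> C \<Longrightarrow> v \<in> V \<Longrightarrow> br x v \<in> V"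
  shows "ideal V"
  unfolding ideal_def using assms right_from_left by blast

lemma idealD:
  assumes "ideal I"
  shows "subspace A I" "graded I" "\<And>x i. x \<in> C \<Longrightarrow> i \<in> I \<Longrightarrow> br x i \<in> I"
    "\<And>x i. x \<in> C \<Longrightarrow> i \<in> I \<Longrightarrow> br i x \<in> I" "I \<subseteq> C"
  using assms unfolding ideal_def subspace_def by auto

lemma center_C: "center A \<subseteq> C" unfolding center_def by blast

lemma centerD: "z \<in> center A \<Longrightarrow> x \<in> C \<Longrightarrow> br z x = zr" unfolding center_def by blast

lemma center_parts:
  assumes z: "z \<in> center A" and e: "e \<in> Ev" and u: "u \<in> Od" and zeu: "z = add e u"
  shows "e \<in> center A" "u \<in> center A"
proof -
  have eC: "e \<in> C" and uC: "u \<in> C" using e u Ev_C Od_C by auto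
  have hom: "br e x = zr \<and> br u x = zr" if xh: "x \<in> Ev \<or> x \<in> Od" for x
  proof -
    have xC: "x \<in> C" using xh Ev_C Od_C by blast
    have "br z x = add (br e x) (br u x)" unfolding zeu using br_add_left[OF eC uC xC] .
    moreover have "br z x = zr" using centerD[OF z xC] .
    ultimately have s0: "add (br e x) (br u x) = zr" by metis
    hence sum: "add (br e x) (br u x) = add zr zr" by simp
    show ?thesis
    proof (cases "x \<in> Ev")
      case True
      have a: "br e x \<in> Ev" "br u x \<in> Od" using br_EE[OF e True] br_OE[OF u True] by auto
      show ?thesis using decomp_unique[OF a(1) zr_Ev a(2) zr_Od sum] by blast
    next
      case False
      hence xO: "x \<in> Od" using xh by blast
      have a: "br e x \<in> Od" "br u x \<in> Ev" using br_EO[OF e xO] br_OO[OF u xO] by auto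
      have "add (br u x) (br e x) = add zr zr"
        using sum add_comm[OF Od_C[OF a(1)] Ev_C[OF a(2)]] by simp
      thus ?thesis using decomp_unique[OF a(2) zr_Ev a(1) zr_Od] by blast
    qed
  qed
  have all: "br e x = zr \<and> br u x = zr" if xC: "x \<in> C" for x
  proof -
    obtain xe xo where x: "xe \<in> Ev" "xo \<in> Od" "x = add xe xo" using decomp xC by blast
    have "br e x = add (br e xe) (br e xo)" "br u x = add (br u xe) (br u xo)"
      unfolding x(3) using br_add_right[OF Ev_C[OF x(1)] Od_C[OF x(2)]] eC uC by auto
    moreover have "br e xe = zr" "br u xe = zr" using hom[of xe] x(1) by auto
    moreover have "br e xo = zr" "br u xo = zr" using hom[of xo] x(2) by auto
    ultimately show ?thesis by simp
  qed
  show "e \<in> center A" "u \<in> center A" unfolding center_def using eC uC all by auto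
qed

lemma center_subspace: "subspace A (center A)"
  unfolding subspace_def
proof (intro conjI ballI allI)
  show "center A \<subseteq> C" by (rule center_C)
  show "zr \<in> center A" unfolding center_def by simp
next
  fix x y assume "x \<in> center A" "y \<in> center A"
  hence h: "x \<in> C" "y \<in> C" "\<And>a. a \<in> C \<Longrightarrow> br x a = zr" "\<And>a. a \<in> C \<Longrightarrow> br y a = zr"
    unfolding center_def by auto
  show "add x y \<in> center A" unfolding center_def using h br_add_left[OF h(1,2)] by simp
next
  fix c x assume "x \<in> center A"
  hence h: "x \<in> C" "\<And>a. a \<in> C \<Longrightarrow> br x a = zr" unfolding center_def by auto
  show "sm c x \<in> center A" unfolding center_def using h br_sm_left[OF h(1)] by simp
qed

lemma center_graded: "graded (center A)"
  unfolding graded_def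
proof
  fix z assume z: "z \<in> center A"
  then obtain e u where "e \<in> Ev" "u \<in> Od" "z = add e u" using decomp center_C by blast
  thus "\<exists>e\<in>center A \<inter> Ev. \<exists>u\<in>center A \<inter> Od. z = add e u" using center_parts[OF z] by blast
qed

lemma center_right: assumes z: "z \<in> center A" and x: "x \<in> C" shows "br x z = zr"
proof -
  obtain ze zo where zz: "ze \<in> Ev" "zo \<in> Od" "z = add ze zo" using decomp z center_C by blast
  have zc: "ze \<in> center A" "zo \<in> center A" using center_parts[OF z zz] by auto
  obtain xe xo where xx: "xe \<in> Ev" "xo \<in> Od" "x = add xe xo" using decomp x by blast
  have h: "br a b = zr" if "b \<in> center A" "a \<in> C" "br a b = sm c (br b a)" for a b c
    using that centerD[OF that(1,2)] by simp
  have zC: "ze \<in> C" "zo \<in> C" using zz Ev_C Od_C by auto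
  have xC: "xe \<in> C" "xo \<in> C" using xx Ev_C Od_C by auto
  obtain c1 c2 c3 c4 where cs: "br xe ze = sm c1 (br ze xe)" "br xo zo = sm c2 (br zo xo)"
    "br xe zo = sm c3 (br zo xe)" "br xo ze = sm c4 (br ze xo)"
    using skew_EvEv[OF xx(1) zz(1)] skew_OdOd[OF xx(2) zz(2)] skew_EvOd[OF xx(1) zz(2)] skew_OdEv[OF xx(2) zz(1)]
    by blast
  have 1: "br xe ze = zr" using h[OF zc(1) xC(1) cs(1)] .
  have 2: "br xo zo = zr" using h[OF zc(2) xC(2) cs(2)] .
  have 3: "br xe zo = zr" using h[OF zc(2) xC(1) cs(3)] .
  have 4: "br xo ze = zr" using h[OF zc(1) xC(2) cs(4)] .
  have "br x z = add (add (br xe ze) (br xo zo)) (add (br xe zo) (br xo ze))"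
    using br_decomp4 xx zz by simp
  thus ?thesis using 1 2 3 4 by simp
qed

lemma center_ideal: "ideal (center A)"
  unfolding ideal_def
proof (intro conjI ballI)
  show "subspace A (center A)" by (rule center_subspace)
  show "graded (center A)" by (rule center_graded)
next
  fix x i assume "x \<in> C" "i \<in> center A"
  moreover have "zr \<in> center A" using subspaceD(2)[OF center_subspace] .
  ultimately show "br x i \<in> center A" "br i x \<in> center A"
    using center_right[of i x] centerD[of i x] by auto
qed

lemma subspace_collect:
  assumes "P zr" "\<And>x y. x \<in> C \<Longrightarrow> y \<in> C \<Longrightarrow> P x \<Longrightarrow> P y \<Longrightarrow> P (add x y)"
    "\<And>c x. x \<in> C \<Longrightarrow> P x \<Longrightarrow> P (sm c x)"
  shows "subspace A {x \<in> C. P x}"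
  unfolding subspace_def using assms by auto

definition "brset U V = {br u v | u v. u \<in> U \<and> v \<in> V}"

lemma brset_C: "U \<subseteq> C \<Longrightarrow> V \<subseteq> C \<Longrightarrow> brset U V \<subseteq> C" unfolding brset_def by auto

lemma lbrs_eq: "lbrs A U V = lspan A (brset U V)" unfolding lbrs_def brset_def by simp

lemma br_span_span:
  assumes U: "U \<subseteq> C" and V: "V \<subseteq> C" and x: "x \<in> lspan A U" and y: "y \<in> lspan A V"
  shows "br x y \<in> lspan A (brset U V)"
proof -
  let ?W = "lspan A (brset U V)"
  have sW: "subspace A ?W" using lspan_subspace[OF brset_C[OF U V]] .
  have WC: "?W \<subseteq> C" using subspaceD(1)[OF sW] .
  have step1: "br u y \<in> ?W" if u: "u \<in> U" for u
    using y V
  proof (induction rule: lspan_induct)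
    case sub
    have uC: "u \<in> C" using u U by blast
    show ?case
    proof (rule subspace_collect)
      show "br u zr \<in> ?W" using uC subspaceD(2)[OF sW] by simp
    next
      fix a b assume "a \<in> C" "b \<in> C" "br u a \<in> ?W" "br u b \<in> ?W"
      thus "br u (add a b) \<in> ?W" using br_add_right[OF \<open>a \<in> C\<close> \<open>b \<in> C\<close> uC] subspaceD(3)[OF sW] by simp
    next
      fix c a assume "a \<in> C" "br u a \<in> ?W"
      thus "br u (sm c a) \<in> ?W" using br_sm_right[OF uC \<open>a \<in> C\<close>] subspaceD(4)[OF sW] by simp
    qed
  next
    case (gen v)
    have "br u v \<in> brset U V" unfolding brset_def using u gen by blast
    thus ?case using lspan_sup[of "brset U V"] by (rule subsetD[rotated])
  qed
  have yC: "y \<in> C" using lspan_in_C[OF V] y by blast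
  show ?thesis using x U
  proof (induction rule: lspan_induct)
    case sub
    show ?case
    proof (rule subspace_collect)
      show "br zr y \<in> ?W" using yC subspaceD(2)[OF sW] by simp
    next
      fix a b assume "a \<in> C" "b \<in> C" "br a y \<in> ?W" "br b y \<in> ?W"
      thus "br (add a b) y \<in> ?W" using br_add_left[OF \<open>a \<in> C\<close> \<open>b \<in> C\<close> yC] subspaceD(3)[OF sW] by simp
    next
      fix c a assume "a \<in> C" "br a y \<in> ?W"
      thus "br (sm c a) y \<in> ?W" using br_sm_left[OF \<open>a \<in> C\<close> yC] subspaceD(4)[OF sW] by simp
    qed
  next
    case (gen u) thus ?case using step1 by blast
  qed
qed

lemma lbrs_subspace: "U \<subseteq> C \<Longrightarrow> V \<subseteq> C \<Longrightarrow> subspace A (lbrs A U V)"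
  unfolding lbrs_eq by (rule lspan_subspace[OF brset_C])

lemma lbrs_graded:
  assumes U: "subspace A U" "graded U" and V: "subspace A V" "graded V"
  shows "graded (lbrs A U V)"
  unfolding lbrs_eq
proof (rule lspan_graded)
  have UC: "U \<subseteq> C" "V \<subseteq> C" using subspaceD(1)[OF U(1)] subspaceD(1)[OF V(1)] by auto
  thus BC: "brset U V \<subseteq> C" using brset_C by blast
  let ?W = "lspan A (brset U V)"
  have sW: "subspace A ?W" using lspan_subspace[OF BC] .
  fix s assume "s \<in> brset U V"
  then obtain u v where s: "s = br u v" "u \<in> U" "v \<in> V" unfolding brset_def by blast
  obtain ue uo where uu: "ue \<in> U" "ue \<in> Ev" "uo \<in> U" "uo \<in> Od" "u = add ue uo"
    using U(2) s(2) unfolding graded_def by blast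
  obtain ve vo where vv: "ve \<in> V" "ve \<in> Ev" "vo \<in> V" "vo \<in> Od" "v = add ve vo"
    using V(2) s(3) unfolding graded_def by blast
  have inW: "br a b \<in> ?W" if "a \<in> U" "b \<in> V" for a b
  proof -
    have "br a b \<in> brset U V" unfolding brset_def using that by blast
    thus ?thesis using lspan_sup[of "brset U V"] by (rule subsetD[rotated])
  qed
  have "s = add (add (br ue ve) (br uo vo)) (add (br ue vo) (br uo ve))"
    unfolding s(1) uu(5) vv(5) using br_decomp4[OF uu(2) uu(4) vv(2) vv(4)] .
  moreover have "add (br ue ve) (br uo vo) \<in> ?W"
    using subspaceD(3)[OF sW inW[OF uu(1) vv(1)] inW[OF uu(3) vv(3)]] .
  moreover have "add (br ue ve) (br uo vo) \<in> Ev"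
    using Ev_add[OF br_EE[OF uu(2) vv(2)] br_OO[OF uu(4) vv(4)]] .
  moreover have "add (br ue vo) (br uo ve) \<in> ?W"
    using subspaceD(3)[OF sW inW[OF uu(1) vv(3)] inW[OF uu(3) vv(1)]] .
  moreover have "add (br ue vo) (br uo ve) \<in> Od"
    using Od_add[OF br_EO[OF uu(2) vv(4)] br_OE[OF uu(4) vv(2)]] .
  ultimately show "\<exists>e\<in>?W \<inter> Ev. \<exists>u\<in>?W \<inter> Od. s = add e u" by blast
qed

lemma derived_eq: "derived A = lspan A (brset C C)" unfolding derived_def lbrs_eq ..

lemma derived_subspace: "subspace A (derived A)" unfolding derived_def by (rule lbrs_subspace) auto
lemma derived_graded: "graded (derived A)" unfolding derived_def
  by (rule lbrs_graded[OF subspace_C graded_C subspace_C graded_C])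
lemma derived_C: "derived A \<subseteq> C" using subspaceD(1)[OF derived_subspace] .
lemma br_in_derived: "x \<in> C \<Longrightarrow> y \<in> C \<Longrightarrow> br x y \<in> derived A"
proof -
  assume "x \<in> C" "y \<in> C"
  hence "br x y \<in> brset C C" unfolding brset_def by blast
  thus ?thesis unfolding derived_eq using lspan_sup[of "brset C C"] by (rule subsetD[rotated])
qed

lemma derived_induct[consumes 1, case_names sub gen]:
  assumes "x \<in> derived A" "subspace A {x \<in> C. P x}" "\<And>a b. a \<in> C \<Longrightarrow> b \<in> C \<Longrightarrow> P (br a b)"
  shows "P x"
  using assms(1)[unfolded derived_eq] brset_C[OF order_refl order_refl]
proof (induction rule: lspan_induct)
  case sub show ?case using assms(2) .
next
  case (gen s) thus ?case using assms(3) unfolding brset_def by blast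
qed

lemma derived_ideal: "ideal (derived A)"
  by (rule idealI[OF derived_subspace derived_graded br_in_derived]) (use derived_C in auto)

end

lemma lhom_comp:
  assumes "lhom A B h" "lhom B D g"
  shows "lhom A D (g \<circ> h)"
  using assms unfolding lhom_def image_subset_iff by (simp add: image_subset_iff) 

locale HOM = A: LSA A + B: LSA B for A :: "('a, 'k::field) lsa" and B :: "('b, 'k) lsa" +
  fixes h :: "'a \<Rightarrow> 'b"
  assumes hom: "lhom A B h"
begin

lemma h_C: "x \<in> A.C \<Longrightarrow> h x \<in> B.C" using hom unfolding lhom_def by blast
lemma h_Ev: "x \<in> A.Ev \<Longrightarrow> h x \<in> B.Ev" using hom unfolding lhom_def by blast
lemma h_Od: "x \<in> A.Od \<Longrightarrow> h x \<in> B.Od" using hom unfolding lhom_def by blast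
lemma h_add: "x \<in> A.C \<Longrightarrow> y \<in> A.C \<Longrightarrow> h (A.add x y) = B.add (h x) (h y)" using hom unfolding lhom_def by blast
lemma h_sm: "x \<in> A.C \<Longrightarrow> h (A.sm c x) = B.sm c (h x)" using hom unfolding lhom_def by blast
lemma h_br: "x \<in> A.C \<Longrightarrow> y \<in> A.C \<Longrightarrow> h (A.br x y) = B.br (h x) (h y)" using hom unfolding lhom_def by blast
lemma h_zero: "h A.zr = B.zr"
proof -
  have "h A.zr = h (A.sm 0 A.zr)" by simp
  also have "\<dots> = B.sm 0 (h A.zr)" using h_sm A.zero_closed by blast
  also have "\<dots> = B.zr" using h_C A.zero_closed by simp
  finally show ?thesis .
qed
lemma h_neg: "x \<in> A.C \<Longrightarrow> h (A.neg x) = B.neg (h x)" using h_sm by blast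
lemma h_sub: "x \<in> A.C \<Longrightarrow> y \<in> A.C \<Longrightarrow> h (A.sub x y) = B.sub (h x) (h y)"
  using h_add h_neg A.sm_closed by simp

lemma image_subspace: assumes "subspace A V" shows "subspace B (h ` V)"
  unfolding subspace_def
proof (intro conjI ballI allI)
  have VC: "V \<subseteq> A.C" using A.subspaceD(1)[OF assms] .
  show "h ` V \<subseteq> B.C" using VC h_C by blast
  show "B.zr \<in> h ` V" using A.subspaceD(2)[OF assms] h_zero by force
next
  fix x y assume "x \<in> h ` V" "y \<in> h ` V"
  then obtain a b where "a \<in> V" "b \<in> V" "x = h a" "y = h b" by blast
  moreover have "a \<in> A.C" "b \<in> A.C" using calculation(1,2) A.subspaceD(1)[OF assms] by auto
  ultimately show "B.add x y \<in> h ` V" using h_add A.subspaceD(3)[OF assms] by (metis image_eqI)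
next
  fix c x assume "x \<in> h ` V"
  then obtain a where "a \<in> V" "x = h a" by blast
  moreover have "a \<in> A.C" using calculation(1) A.subspaceD(1)[OF assms] by auto
  ultimately show "B.sm c x \<in> h ` V" using h_sm A.subspaceD(4)[OF assms] by (metis image_eqI)
qed

lemma preimage_subspace: assumes "subspace B W" shows "subspace A {x \<in> A.C. h x \<in> W}"
proof (rule A.subspace_collect)
  show "h A.zr \<in> W" using h_zero B.subspaceD(2)[OF assms] by simp
next
  fix x y assume "x \<in> A.C" "y \<in> A.C" "h x \<in> W" "h y \<in> W"
  thus "h (A.add x y) \<in> W" using h_add B.subspaceD(3)[OF assms] by simp
next
  fix c x assume "x \<in> A.C" "h x \<in> W"
  thus "h (A.sm c x) \<in> W" using h_sm B.subspaceD(4)[OF assms] by simp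
qed

lemma image_span: assumes S: "S \<subseteq> A.C" shows "h ` lspan A S = lspan B (h ` S)"
proof
  have hS: "h ` S \<subseteq> B.C" using S h_C by blast
  have sub: "subspace B (lspan B (h ` S))" using B.lspan_subspace[OF hS] .
  have "lspan A S \<subseteq> {x \<in> A.C. h x \<in> lspan B (h ` S)}"
  proof (rule A.lspan_least[OF preimage_subspace[OF sub]])
    show "S \<subseteq> {x \<in> A.C. h x \<in> lspan B (h ` S)}" using S B.lspan_sup[of "h ` S"] by blast
  qed
  thus "h ` lspan A S \<subseteq> lspan B (h ` S)" by blast
  show "lspan B (h ` S) \<subseteq> h ` lspan A S"
    by (rule B.lspan_least[OF image_subspace[OF A.lspan_subspace[OF S]]])
       (use A.lspan_sup[of S] in blast)
qed

lemma kernel_eq: "lkernel A B h = {x \<in> A.C. h x \<in> {B.zr}}" unfolding lkernel_def by simp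

lemma zero_subspace: "subspace B {B.zr}" unfolding subspace_def by auto

lemma kernel_subspace: "subspace A (lkernel A B h)"
  unfolding kernel_eq using preimage_subspace[OF zero_subspace] .

lemma kernel_graded: "A.graded (lkernel A B h)"
  unfolding A.graded_def
proof
  fix x assume x: "x \<in> lkernel A B h"
  then obtain e u where eu: "e \<in> A.Ev" "u \<in> A.Od" "x = A.add e u" using A.decomp unfolding lkernel_def by blast
  have C: "e \<in> A.C" "u \<in> A.C" using eu A.Ev_C A.Od_C by auto
  have "B.add (h e) (h u) = B.add B.zr B.zr" using x eu(3) h_add[OF C] unfolding lkernel_def by simp
  hence "h e = B.zr \<and> h u = B.zr" using B.decomp_unique[OF h_Ev[OF eu(1)] B.zr_Ev h_Od[OF eu(2)] B.zr_Od] by blast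
  thus "\<exists>e\<in>lkernel A B h \<inter> A.Ev. \<exists>u\<in>lkernel A B h \<inter> A.Od. x = A.add e u"
    using eu C unfolding lkernel_def by blast
qed

lemma kernel_ideal: "A.ideal (lkernel A B h)"
proof (rule A.idealI[OF kernel_subspace kernel_graded])
  fix x v assume "x \<in> A.C" "v \<in> lkernel A B h"
  thus "A.br x v \<in> lkernel A B h" unfolding lkernel_def using h_br h_C by simp
qed

lemma image_derived: assumes surj: "h ` A.C = B.C" shows "h ` derived A = derived B"
proof -
  have "h ` derived A = lspan B (h ` A.brset A.C A.C)"
    unfolding A.derived_eq by (rule image_span[OF A.brset_C]) auto
  also have "h ` A.brset A.C A.C = B.brset B.C B.C"
  proof
    show "h ` A.brset A.C A.C \<subseteq> B.brset B.C B.C"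
      unfolding A.brset_def B.brset_def using h_br h_C by fastforce
    show "B.brset B.C B.C \<subseteq> h ` A.brset A.C A.C"
    proof
      fix z assume "z \<in> B.brset B.C B.C"
      then obtain u v where "u \<in> B.C" "v \<in> B.C" "z = B.br u v" unfolding B.brset_def by blast
      hence "u \<in> h ` A.C" "v \<in> h ` A.C" using surj by auto
      then obtain a b where "a \<in> A.C" "b \<in> A.C" "u = h a" "v = h b" by blast
      hence "z = h (A.br a b)" "A.br a b \<in> A.brset A.C A.C" using h_br \<open>z = B.br u v\<close>
        unfolding A.brset_def by auto
      thus "z \<in> h ` A.brset A.C A.C" by blast
    qed
  qed
  finally show ?thesis unfolding B.derived_eq .
qed

lemma image_center: assumes surj: "h ` A.C = B.C" and z: "z \<in> center A" shows "h z \<in> center B"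
proof -
  have zC: "z \<in> A.C" using z A.center_C by blast
  have "B.br (h z) y = B.zr" if "y \<in> B.C" for y
  proof -
    have "y \<in> h ` A.C" using surj that by simp
    then obtain a where a: "a \<in> A.C" "y = h a" by blast
    have "B.br (h z) y = h (A.br z a)" using h_br[OF zC a(1)] a(2) by simp
    also have "\<dots> = h A.zr" using A.centerD[OF z a(1)] by simp
    finally show ?thesis using h_zero by simp
  qed
  thus ?thesis unfolding center_def using h_C[OF zC] by blast
qed

lemma image_Ev: assumes surj: "h ` A.C = B.C" and y: "y \<in> B.Ev" shows "\<exists>x\<in>A.Ev. h x = y"
proof -
  have "y \<in> h ` A.C" using surj B.Ev_C[OF y] by simp
  then obtain a where a: "a \<in> A.C" "y = h a" by blast
  obtain e u where eu: "e \<in> A.Ev" "u \<in> A.Od" "a = A.add e u" using A.decomp a(1) by blast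
  have "B.add (h e) (h u) = B.add y B.zr" using a eu h_add A.Ev_C A.Od_C B.Ev_C y by simp
  hence "h e = y" using B.decomp_unique[OF h_Ev[OF eu(1)] y h_Od[OF eu(2)] B.zr_Od] by blast
  thus ?thesis using eu by blast
qed

lemma image_Od: assumes surj: "h ` A.C = B.C" and y: "y \<in> B.Od" shows "\<exists>x\<in>A.Od. h x = y"
proof -
  have "y \<in> h ` A.C" using surj B.Od_C[OF y] by simp
  then obtain a where a: "a \<in> A.C" "y = h a" by blast
  obtain e u where eu: "e \<in> A.Ev" "u \<in> A.Od" "a = A.add e u" using A.decomp a(1) by blast
  have "B.add (h e) (h u) = B.add B.zr y" using a eu h_add A.Ev_C A.Od_C B.Od_C y by simp
  hence "h u = y" using B.decomp_unique[OF h_Ev[OF eu(1)] B.zr_Ev h_Od[OF eu(2)] y] by blast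
  thus ?thesis using eu by blast
qed

end

lemma lgen_subspace_closed:
  assumes "subspace A V" "S \<subseteq> V" "\<forall>x\<in>V. \<forall>y\<in>V. lbr A x y \<in> V"
  shows "lgen A S \<subseteq> V"
  unfolding lgen_def using assms by (intro Inter_lower) simp

lemma (in HOM) hom_agree_lgen:
  assumes g: "lhom A B g" and S: "S \<subseteq> A.C" and eq: "\<And>s. s \<in> S \<Longrightarrow> h s = g s" and x: "x \<in> lgen A S"
  shows "h x = g x"
proof -
  interpret G: HOM A B g using g by unfold_locales
  let ?V = "{x \<in> A.C. h x = g x}"
  have "subspace A ?V"
  proof (rule A.subspace_collect)
    show "h A.zr = g A.zr" using h_zero G.h_zero by simp
  next
    fix a b assume "a \<in> A.C" "b \<in> A.C" "h a = g a" "h b = g b"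
    thus "h (A.add a b) = g (A.add a b)" using h_add G.h_add by simp
  next
    fix c a assume "a \<in> A.C" "h a = g a"
    thus "h (A.sm c a) = g (A.sm c a)" using h_sm G.h_sm by simp
  qed
  moreover have "\<forall>a\<in>?V. \<forall>b\<in>?V. A.br a b \<in> ?V"
  proof (intro ballI)
    fix a b assume "a \<in> ?V" "b \<in> ?V"
    thus "A.br a b \<in> ?V" using h_br[of a b] G.h_br[of a b] by simp
  qed
  moreover have "S \<subseteq> ?V" using S eq by blast
  ultimately have "lgen A S \<subseteq> ?V" using lgen_subspace_closed[of A ?V S] by blast
  thus ?thesis using x by blast
qed

lemma liso_inv:
  assumes "liso A B g" "lie_superalgebra A" "lie_superalgebra B"
  shows "lhom B A (inv_into (lcarrier A) g)" "bij_betw (inv_into (lcarrier A) g) (lcarrier B) (lcarrier A)"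
proof -
  interpret HOM A B g using assms unfolding liso_def by unfold_locales auto
  have bij: "bij_betw g A.C B.C" using assms unfolding liso_def by blast
  let ?f = "inv_into A.C g"
  have inj: "inj_on g A.C" using bij bij_betw_def by blast
  have f1: "?f (g x) = x" if "x \<in> A.C" for x using inv_into_f_f[OF inj that] .
  have surj: "g ` A.C = B.C" using bij_betw_imp_surj_on[OF bij] .
  have f2: "y \<in> B.C \<Longrightarrow> ?f y \<in> A.C \<and> g (?f y) = y" for y
    using inv_into_into[of y g A.C] f_inv_into_f[of y g A.C] surj by simp
  show "bij_betw ?f B.C A.C" using bij_betw_inv_into[OF bij] .
  show "lhom B A ?f" unfolding lhom_def
  proof (intro conjI ballI allI subsetI)
    show "y \<in> ?f ` B.C \<Longrightarrow> y \<in> A.C" for y using f2 by blast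
  next
    fix y assume "y \<in> ?f ` B.Ev"
    then obtain b where b: "b \<in> B.Ev" "y = ?f b" by blast
    obtain a where a: "a \<in> A.Ev" "g a = b" using image_Ev[OF surj b(1)] by blast
    show "y \<in> A.Ev" using b a f1[OF A.Ev_C[OF a(1)]] by simp
  next
    fix y assume "y \<in> ?f ` B.Od"
    then obtain b where b: "b \<in> B.Od" "y = ?f b" by blast
    obtain a where a: "a \<in> A.Od" "g a = b" using image_Od[OF surj b(1)] by blast
    show "y \<in> A.Od" using b a f1[OF A.Od_C[OF a(1)]] by simp
  next
    fix x y assume "x \<in> B.C" "y \<in> B.C"
    hence fx: "?f x \<in> A.C" "g (?f x) = x" "?f y \<in> A.C" "g (?f y) = y" using f2 by auto
    have "?f (B.add x y) = ?f (g (A.add (?f x) (?f y)))" using h_add[OF fx(1,3)] fx by simp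
    thus "?f (B.add x y) = A.add (?f x) (?f y)" using f1 fx by simp
    have "?f (B.br x y) = ?f (g (A.br (?f x) (?f y)))" using h_br[OF fx(1,3)] fx by simp
    thus "?f (B.br x y) = A.br (?f x) (?f y)" using f1 fx by simp
  next
    fix c x assume "x \<in> B.C"
    hence fx: "?f x \<in> A.C" "g (?f x) = x" using f2 by auto
    have "?f (B.sm c x) = ?f (g (A.sm c (?f x)))" using h_sm[OF fx(1)] fx by simp
    thus "?f (B.sm c x) = A.sm c (?f x)" using f1 fx by simp
  qed
qed

context VS begin

lemma sub_trans: assumes "x \<in> C" "y \<in> C" "z \<in> C"
  shows "add (sub z x) (sub x y) = sub z y"
proof -
  have "add (sub z x) (sub x y) = add z (add (neg x) (add x (neg y)))"
    using assms by (simp add: add_assoc)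
  also have "add (neg x) (add x (neg y)) = neg y" using assms by (simp add: add_assoc[symmetric])
  finally show ?thesis .
qed

lemma sub_add_add: assumes "a \<in> C" "b \<in> C" "c \<in> C" "d \<in> C"
  shows "sub (add a b) (add c d) = add (sub a c) (sub b d)"
proof -
  have "sub (add a b) (add c d) = add (add a b) (add (neg c) (neg d))"
    using assms neg_add_distrib by simp
  also have "\<dots> = add (sub a c) (sub b d)" by (rule add_4swap) (use assms in auto)
  finally show ?thesis .
qed

lemma sm_sub: "x \<in> C \<Longrightarrow> y \<in> C \<Longrightarrow> sm c (sub x y) = sub (sm c x) (sm c y)"
  by (simp add: sm_add_right sm_neg)

lemma neg_sub: "x \<in> C \<Longrightarrow> y \<in> C \<Longrightarrow> neg (sub x y) = sub y x"
  using neg_add_distrib add_comm by simp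

end

context LSA begin

lemma br_sub_sub: assumes "x \<in> C" "y \<in> C" "x' \<in> C" "y' \<in> C"
  shows "sub (br x' y') (br x y) = add (br (sub x' x) y') (br x (sub y' y))"
proof -
  have "add (br (sub x' x) y') (br x (sub y' y)) = add (sub (br x' y') (br x y')) (sub (br x y') (br x y))"
    using assms br_sub_left br_sub_right by simp
  also have "\<dots> = sub (br x' y') (br x y)" using sub_trans assms by simp
  finally show ?thesis ..
qed

end

locale QUOT = LSA A for A :: "('a, 'k::field) lsa" +
  fixes I :: "'a set"
  assumes idl: "ideal I"
begin

abbreviation "Q \<equiv> lquot A I"
abbreviation "cs \<equiv> lcoset A I"

lemma I_C: "I \<subseteq> C" using idealD(5)[OF idl] .
lemma I_sub: "subspace A I" using idealD(1)[OF idl] .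
lemma zr_I: "zr \<in> I" using subspaceD(2)[OF I_sub] .
lemma I_add: "x \<in> I \<Longrightarrow> y \<in> I \<Longrightarrow> add x y \<in> I" using subspaceD(3)[OF I_sub] .
lemma I_sm: "x \<in> I \<Longrightarrow> sm c x \<in> I" using subspaceD(4)[OF I_sub] .
lemma I_brl: "x \<in> C \<Longrightarrow> i \<in> I \<Longrightarrow> br i x \<in> I" using idealD(4)[OF idl] .
lemma I_brr: "x \<in> C \<Longrightarrow> i \<in> I \<Longrightarrow> br x i \<in> I" using idealD(3)[OF idl] .

lemma cs_mem_iff: assumes "x \<in> C" shows "z \<in> cs x \<longleftrightarrow> z \<in> C \<and> sub z x \<in> I"
proof
  assume "z \<in> cs x"
  then obtain i where i: "i \<in> I" "z = add x i" unfolding lcoset_def by blast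
  have iC: "i \<in> C" using i I_C by blast
  have "sub z x = i" using i(2) assms iC add_comm by simp
  thus "z \<in> C \<and> sub z x \<in> I" using i assms iC by simp
next
  assume "z \<in> C \<and> sub z x \<in> I"
  moreover have "z = add x (sub z x)" using calculation assms by simp
  ultimately show "z \<in> cs x" unfolding lcoset_def by blast
qed

lemma cs_eq_iff: assumes "x \<in> C" "y \<in> C" shows "cs x = cs y \<longleftrightarrow> sub x y \<in> I"
proof
  assume "cs x = cs y"
  moreover have "x \<in> cs x" using cs_mem_iff assms zr_I by simp
  ultimately show "sub x y \<in> I" using cs_mem_iff assms by blast
next
  assume d: "sub x y \<in> I"
  have d2: "sub y x \<in> I" using I_sm[OF d, of "-1"] neg_sub[OF assms] by simp
  show "cs x = cs y"
  proof (rule set_eqI)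
    fix z
    show "z \<in> cs x \<longleftrightarrow> z \<in> cs y"
    proof
      assume "z \<in> cs x"
      hence z: "z \<in> C" "sub z x \<in> I" using cs_mem_iff assms by auto
      have "sub z y = add (sub z x) (sub x y)" using sub_trans assms z by simp
      thus "z \<in> cs y" using cs_mem_iff assms z I_add d by simp
    next
      assume "z \<in> cs y"
      hence z: "z \<in> C" "sub z y \<in> I" using cs_mem_iff assms by auto
      have "sub z x = add (sub z y) (sub y x)" using sub_trans assms z by simp
      thus "z \<in> cs x" using cs_mem_iff assms z I_add d2 by simp
    qed
  qed
qed

lemma rep_cs: assumes "x \<in> C" shows "rep (cs x) \<in> C" "sub (rep (cs x)) x \<in> I"
proof -
  have "x \<in> cs x" using cs_mem_iff assms zr_I by simp
  hence "rep (cs x) \<in> cs x" unfolding rep_def by (rule someI)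
  thus "rep (cs x) \<in> C" "sub (rep (cs x)) x \<in> I" using cs_mem_iff assms by auto
qed

lemma cs_rep: assumes "x \<in> C" shows "cs (rep (cs x)) = cs x"
  using cs_eq_iff rep_cs assms by simp

lemma Q_carrier: "lcarrier Q = cs ` C" unfolding lquot_def by simp
lemma Q_even: "leven Q = cs ` Ev" unfolding lquot_def by simp
lemma Q_odd: "lodd Q = cs ` Od" unfolding lquot_def by simp
lemma Q_zero: "lzero Q = cs zr" unfolding lquot_def by simp

lemma Q_add: assumes "x \<in> C" "y \<in> C" shows "ladd Q (cs x) (cs y) = cs (add x y)"
proof -
  have "ladd Q (cs x) (cs y) = cs (add (rep (cs x)) (rep (cs y)))" unfolding lquot_def by simp
  also have "\<dots> = cs (add x y)"
    using cs_eq_iff rep_cs assms sub_add_add I_add by simp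
  finally show ?thesis .
qed

lemma Q_sm: assumes "x \<in> C" shows "lsmul Q c (cs x) = cs (sm c x)"
proof -
  have "lsmul Q c (cs x) = cs (sm c (rep (cs x)))" unfolding lquot_def by simp
  also have "\<dots> = cs (sm c x)"
    using cs_eq_iff rep_cs assms sm_sub[symmetric] I_sm by simp
  finally show ?thesis .
qed

lemma Q_br: assumes "x \<in> C" "y \<in> C" shows "lbr Q (cs x) (cs y) = cs (br x y)"
proof -
  have "lbr Q (cs x) (cs y) = cs (br (rep (cs x)) (rep (cs y)))" unfolding lquot_def by simp
  also have "\<dots> = cs (br x y)"
  proof -
    have r: "rep (cs x) \<in> C" "rep (cs y) \<in> C" "sub (rep (cs x)) x \<in> I" "sub (rep (cs y)) y \<in> I"
      using rep_cs assms by auto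
    have "sub (br (rep (cs x)) (rep (cs y))) (br x y) \<in> I"
      using br_sub_sub[OF assms r(1,2)] I_add I_brl I_brr r assms by simp
    thus ?thesis using cs_eq_iff r assms by simp
  qed
  finally show ?thesis .
qed

lemma cs_zero_iff: "x \<in> C \<Longrightarrow> cs x = cs zr \<longleftrightarrow> x \<in> I"
  using cs_eq_iff by simp

end

context QUOT begin

lemma homog_Q_iff: "homog Q d X \<longleftrightarrow> (\<exists>x. homog A d x \<and> X = cs x)"
  unfolding homog_def Q_even Q_odd by (cases d) auto

lemma Q_lsa: "lie_superalgebra Q"
proof -
  have vs: "vspace Q" unfolding vspace_def Q_carrier Q_zero
    apply (simp add: Q_add Q_sm add_assoc sm_add_left sm_add_right)
    using add_comm by auto
  have subE: "subspace Q (leven Q)" unfolding subspace_def Q_carrier Q_even Q_zero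
    using Ev_C by (auto simp: Q_add Q_sm Ev_add Ev_sm)
  have subO: "subspace Q (lodd Q)" unfolding subspace_def Q_carrier Q_odd Q_zero
    using Od_C by (auto simp: Q_add Q_sm Od_add Od_sm)
  have EO: "leven Q \<inter> lodd Q = {lzero Q}"
  proof
    show "{lzero Q} \<subseteq> leven Q \<inter> lodd Q" unfolding Q_even Q_odd Q_zero by auto
    show "leven Q \<inter> lodd Q \<subseteq> {lzero Q}"
    proof
      fix X assume "X \<in> leven Q \<inter> lodd Q"
      then obtain e u where eu: "e \<in> Ev" "u \<in> Od" "X = cs e" "cs e = cs u"
        unfolding Q_even Q_odd by auto
      have C: "e \<in> C" "u \<in> C" using eu Ev_C Od_C by auto
      have "sub e u \<in> I" using cs_eq_iff[OF C] eu by simp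
      hence "e \<in> I" using graded_parts(1)[OF idealD(2)[OF idl] _ eu(1) Od_sm[OF eu(2)]] by simp
      thus "X \<in> {lzero Q}" using eu(3) cs_zero_iff C Q_zero by simp
    qed
  qed
  have dec: "\<forall>X\<in>lcarrier Q. \<exists>E\<in>leven Q. \<exists>U\<in>lodd Q. X = ladd Q E U"
    unfolding Q_carrier Q_even Q_odd
  proof (simp, intro ballI)
    fix x assume "x \<in> C"
    then obtain e u where "e \<in> Ev" "u \<in> Od" "x = add e u" using decomp by blast
    thus "\<exists>e\<in>Ev. \<exists>u\<in>Od. cs x = ladd Q (cs e) (cs u)" using Q_add Ev_C Od_C by metis
  qed
  have brc: "\<forall>X\<in>lcarrier Q. \<forall>Y\<in>lcarrier Q. lbr Q X Y \<in> lcarrier Q"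
    unfolding Q_carrier by (simp add: Q_br)
  have bra: "\<forall>X\<in>lcarrier Q. \<forall>Y\<in>lcarrier Q. \<forall>Z\<in>lcarrier Q.
        lbr Q (ladd Q X Y) Z = ladd Q (lbr Q X Z) (lbr Q Y Z) \<and>
        lbr Q Z (ladd Q X Y) = ladd Q (lbr Q Z X) (lbr Q Z Y)"
    unfolding Q_carrier by (simp add: Q_br Q_add br_add_left br_add_right)
  have brs: "\<forall>c. \<forall>X\<in>lcarrier Q. \<forall>Y\<in>lcarrier Q.
        lbr Q (lsmul Q c X) Y = lsmul Q c (lbr Q X Y) \<and>
        lbr Q X (lsmul Q c Y) = lsmul Q c (lbr Q X Y)"
    unfolding Q_carrier by (simp add: Q_br Q_sm br_sm_left br_sm_right)
  have par: "\<forall>d e X Y. homog Q d X \<longrightarrow> homog Q e Y \<longrightarrow> homog Q (d \<noteq> e) (lbr Q X Y)"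
  proof (intro allI impI)
    fix d e X Y assume "homog Q d X" "homog Q e Y"
    then obtain x y where xy: "homog A d x" "X = cs x" "homog A e y" "Y = cs y"
      unfolding homog_Q_iff by blast
    have "lbr Q X Y = cs (br x y)" using xy Q_br homog_C by simp
    thus "homog Q (d \<noteq> e) (lbr Q X Y)" unfolding homog_Q_iff using br_parity xy by blast
  qed
  have skw: "\<forall>d e X Y. homog Q d X \<longrightarrow> homog Q e Y \<longrightarrow> lbr Q X Y = lsmul Q (- gsign d e) (lbr Q Y X)"
  proof (intro allI impI)
    fix d e X Y assume "homog Q d X" "homog Q e Y"
    then obtain x y where xy: "homog A d x" "X = cs x" "homog A e y" "Y = cs y"
      unfolding homog_Q_iff by blast
    have C: "x \<in> C" "y \<in> C" using xy homog_C by auto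
    have "lbr Q X Y = cs (br x y)" using xy Q_br C by simp
    also have "\<dots> = cs (sm (- gsign d e) (br y x))" using br_skew[OF xy(1) xy(3)] by simp
    also have "\<dots> = lsmul Q (- gsign d e) (lbr Q Y X)" using xy Q_br Q_sm C by simp
    finally show "lbr Q X Y = lsmul Q (- gsign d e) (lbr Q Y X)" .
  qed
  have jac: "\<forall>d e f X Y Z. homog Q d X \<longrightarrow> homog Q e Y \<longrightarrow> homog Q f Z \<longrightarrow>
        ladd Q (ladd Q (lsmul Q (gsign d f) (lbr Q X (lbr Q Y Z)))
                        (lsmul Q (gsign e d) (lbr Q Y (lbr Q Z X))))
               (lsmul Q (gsign f e) (lbr Q Z (lbr Q X Y))) = lzero Q"
  proof (intro allI impI)
    fix d e f X Y Z assume "homog Q d X" "homog Q e Y" "homog Q f Z"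
    then obtain x y z where xy: "homog A d x" "X = cs x" "homog A e y" "Y = cs y" "homog A f z" "Z = cs z"
      unfolding homog_Q_iff by blast
    have C: "x \<in> C" "y \<in> C" "z \<in> C" using xy homog_C by auto
    have J: "add (add (sm (gsign d f) (br x (br y z))) (sm (gsign e d) (br y (br z x))))
               (sm (gsign f e) (br z (br x y))) = zr"
      using L_jacobi xy by blast
    show "ladd Q (ladd Q (lsmul Q (gsign d f) (lbr Q X (lbr Q Y Z)))
                        (lsmul Q (gsign e d) (lbr Q Y (lbr Q Z X))))
               (lsmul Q (gsign f e) (lbr Q Z (lbr Q X Y))) = lzero Q"
      using J C unfolding xy(2,4,6) Q_zero by (simp add: Q_br Q_sm Q_add)
  qed
  show ?thesis unfolding lie_superalgebra_def
    using vs subE subO EO dec brc bra brs par skw jac by blast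
qed

lemma proj_hom: "lhom A Q cs"
  unfolding lhom_def Q_carrier Q_even Q_odd
  using Ev_C Od_C by (auto simp: Q_add Q_sm Q_br)

lemma proj_surj: "cs ` C = lcarrier Q" using Q_carrier by simp

lemma proj_kernel: "lkernel A Q cs = I"
  unfolding lkernel_def Q_zero using cs_zero_iff I_C by auto

end

context LSA begin
lemma br_center_shift:
  assumes "c \<in> C" "c' \<in> C" "d \<in> C" "d' \<in> C" "sub c c' \<in> center A" "sub d d' \<in> center A"
  shows "br c d = br c' d'"
proof -
  have "sub (br c d) (br c' d') = add (br (sub c c') d) (br c' (sub d d'))"
    using br_sub_sub[of c' d' c d] assms by simp
  also have "\<dots> = zr" using centerD[OF assms(5)] center_right[OF assms(6)] assms by simp
  finally show ?thesis using assms by simp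
qed
end

lemma lrestrict_simps[simp]:
  "lcarrier (lrestrict A S) = S" "leven (lrestrict A S) = leven A \<inter> S" "lodd (lrestrict A S) = lodd A \<inter> S"
  "ladd (lrestrict A S) = ladd A" "lsmul (lrestrict A S) = lsmul A" "lbr (lrestrict A S) = lbr A"
  "lzero (lrestrict A S) = lzero A"
  unfolding lrestrict_def by simp_all

locale ISOC = FQ: QUOT F I + T: LSA T for F :: "('f, 'k::field) lsa" and I and T :: "('t, 'k) lsa" +
  fixes \<alpha> :: "'f \<Rightarrow> 't"
  assumes hom: "lhom F T \<alpha>" and surj: "\<alpha> ` lcarrier F = lcarrier T"
    and killI: "\<And>i. i \<in> I \<Longrightarrow> \<alpha> i = lzero T"
    and key: "\<And>f. f \<in> derived F \<Longrightarrow> \<alpha> f = lzero T \<Longrightarrow> f \<in> I"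
begin

sublocale H: HOM F T \<alpha> using hom by unfold_locales
sublocale Q: LSA FQ.Q using FQ.Q_lsa by unfold_locales
sublocale HQ: HOM F FQ.Q FQ.cs using FQ.proj_hom by unfold_locales
sublocale TT: QUOT T "center T" using T.center_ideal by unfold_locales
sublocale QQ: QUOT FQ.Q "center FQ.Q" using Q.center_ideal by unfold_locales

definition "Cs = {f \<in> FQ.C. \<forall>g\<in>FQ.C. FQ.br f g \<in> I}"

lemma c1: assumes f: "f \<in> FQ.C" shows "FQ.cs f \<in> center FQ.Q \<longleftrightarrow> f \<in> Cs"
proof -
  have "FQ.cs f \<in> center FQ.Q \<longleftrightarrow> (\<forall>g\<in>FQ.C. lbr FQ.Q (FQ.cs f) (FQ.cs g) = lzero FQ.Q)"
    unfolding center_def FQ.Q_carrier using f by auto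
  also have "\<dots> \<longleftrightarrow> (\<forall>g\<in>FQ.C. FQ.br f g \<in> I)"
    using f FQ.Q_br FQ.Q_zero FQ.cs_zero_iff by simp
  finally show ?thesis unfolding Cs_def using f by blast
qed

lemma c2: assumes f: "f \<in> FQ.C" shows "\<alpha> f \<in> center T \<longleftrightarrow> f \<in> Cs"
proof -
  have "\<alpha> f \<in> center T \<longleftrightarrow> (\<forall>t\<in>T.C. T.br (\<alpha> f) t = T.zr)"
    unfolding center_def using H.h_C[OF f] by auto
  also have "\<dots> \<longleftrightarrow> (\<forall>g\<in>FQ.C. T.br (\<alpha> f) (\<alpha> g) = T.zr)"
    unfolding surj[symmetric] by simp
  also have "\<dots> \<longleftrightarrow> (\<forall>g\<in>FQ.C. FQ.br f g \<in> I)"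
  proof (intro ball_cong refl)
    fix g assume g: "g \<in> FQ.C"
    have "T.br (\<alpha> f) (\<alpha> g) = \<alpha> (FQ.br f g)" using H.h_br f g by simp
    moreover have "FQ.br f g \<in> derived F" using FQ.br_in_derived f g by blast
    ultimately show "T.br (\<alpha> f) (\<alpha> g) = T.zr \<longleftrightarrow> FQ.br f g \<in> I" using key killI by metis
  qed
  finally show ?thesis unfolding Cs_def using f by blast
qed

definition "\<beta> = inv_into FQ.C \<alpha>"
definition "\<phi> X = QQ.cs (FQ.cs (\<beta> (rep X)))"
definition "\<beta>d = inv_into (derived F) \<alpha>"
definition "\<theta> t = FQ.cs (\<beta>d t)"

lemma beta: assumes "t \<in> T.C" shows "\<beta> t \<in> FQ.C" "\<alpha> (\<beta> t) = t"
proof -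
  have "t \<in> \<alpha> ` FQ.C" using surj assms by simp
  thus "\<beta> t \<in> FQ.C" "\<alpha> (\<beta> t) = t" unfolding \<beta>_def by (auto intro: inv_into_into f_inv_into_f)
qed

lemma derived_img: "\<alpha> ` derived F = derived T" using H.image_derived[OF surj] .

lemma betad: assumes "t \<in> derived T" shows "\<beta>d t \<in> derived F" "\<alpha> (\<beta>d t) = t"
proof -
  have "t \<in> \<alpha> ` derived F" using derived_img assms by simp
  thus "\<beta>d t \<in> derived F" "\<alpha> (\<beta>d t) = t" unfolding \<beta>d_def by (auto intro: inv_into_into f_inv_into_f)
qed

lemma qC: "f \<in> FQ.C \<Longrightarrow> FQ.cs f \<in> Q.C" using HQ.h_C .

lemma phi_cs: assumes f: "f \<in> FQ.C" shows "\<phi> (TT.cs (\<alpha> f)) = QQ.cs (FQ.cs f)"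
proof -
  let ?r = "rep (TT.cs (\<alpha> f))"
  have af: "\<alpha> f \<in> T.C" using H.h_C f .
  have r: "?r \<in> T.C" "T.sub ?r (\<alpha> f) \<in> center T" using TT.rep_cs[OF af] by auto
  have b: "\<beta> ?r \<in> FQ.C" "\<alpha> (\<beta> ?r) = ?r" using beta[OF r(1)] by auto
  have "\<alpha> (FQ.sub (\<beta> ?r) f) = T.sub ?r (\<alpha> f)" using H.h_sub b f by simp
  hence "FQ.sub (\<beta> ?r) f \<in> Cs" using c2[of "FQ.sub (\<beta> ?r) f"] r(2) b f by simp
  hence "FQ.cs (FQ.sub (\<beta> ?r) f) \<in> center FQ.Q" using c1[of "FQ.sub (\<beta> ?r) f"] b f by simp
  hence "Q.sub (FQ.cs (\<beta> ?r)) (FQ.cs f) \<in> center FQ.Q" using HQ.h_sub b f by simp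
  hence "QQ.cs (FQ.cs (\<beta> ?r)) = QQ.cs (FQ.cs f)" using QQ.cs_eq_iff qC b f by simp
  thus ?thesis unfolding \<phi>_def .
qed

lemma theta_eq: assumes f: "f \<in> derived F" shows "\<theta> (\<alpha> f) = FQ.cs f"
proof -
  have af: "\<alpha> f \<in> derived T" using derived_img f by blast
  have b: "\<beta>d (\<alpha> f) \<in> derived F" "\<alpha> (\<beta>d (\<alpha> f)) = \<alpha> f" using betad[OF af] by auto
  have fC: "f \<in> FQ.C" "\<beta>d (\<alpha> f) \<in> FQ.C" using f b FQ.derived_C by auto
  have "FQ.sub (\<beta>d (\<alpha> f)) f \<in> derived F" using FQ.subspace_sub[OF FQ.derived_subspace b(1) f] .
  moreover have "\<alpha> (FQ.sub (\<beta>d (\<alpha> f)) f) = T.zr" using H.h_sub fC b H.h_C by simp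
  ultimately have "FQ.sub (\<beta>d (\<alpha> f)) f \<in> I" using key by blast
  thus ?thesis unfolding \<theta>_def using FQ.cs_eq_iff fC by simp
qed

lemma TZ_carrier: "lcarrier (lquot T (center T)) = (\<lambda>f. TT.cs (\<alpha> f)) ` FQ.C"
  unfolding TT.Q_carrier surj[symmetric] by auto

end

context ISOC begin

lemma phi_liso: "liso (lquot T (center T)) (lquot FQ.Q (center FQ.Q)) \<phi>"
proof -
  have allX: "\<And>P. (\<forall>X\<in>lcarrier (lquot T (center T)). P X) \<longleftrightarrow> (\<forall>f\<in>FQ.C. P (TT.cs (\<alpha> f)))"
    unfolding TZ_carrier by simp
  have aC: "\<And>f. f \<in> FQ.C \<Longrightarrow> \<alpha> f \<in> T.C" using H.h_C .
  have hom: "lhom (lquot T (center T)) (lquot FQ.Q (center FQ.Q)) \<phi>"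
    unfolding lhom_def
  proof (intro conjI)
    show "\<phi> ` lcarrier (lquot T (center T)) \<subseteq> lcarrier (lquot FQ.Q (center FQ.Q))"
    proof
      fix Y assume "Y \<in> \<phi> ` lcarrier (lquot T (center T))"
      then obtain X where X: "X \<in> lcarrier (lquot T (center T))" "Y = \<phi> X" by (rule imageE)
      from X(1) obtain f where f: "f \<in> FQ.C" "X = TT.cs (\<alpha> f)" unfolding TZ_carrier by (rule imageE)
      have "Y = QQ.cs (FQ.cs f)" using X(2) f phi_cs by simp
      thus "Y \<in> lcarrier (lquot FQ.Q (center FQ.Q))" unfolding QQ.Q_carrier using qC[OF f(1)] by (rule image_eqI)
    qed
    show "\<phi> ` leven (lquot T (center T)) \<subseteq> leven (lquot FQ.Q (center FQ.Q))"
    proof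
      fix Y assume "Y \<in> \<phi> ` leven (lquot T (center T))"
      then obtain t where t: "t \<in> T.Ev" "Y = \<phi> (TT.cs t)" unfolding TT.Q_even by blast
      obtain f where f: "f \<in> FQ.Ev" "\<alpha> f = t" using H.image_Ev[OF surj t(1)] by blast
      have "Y = QQ.cs (FQ.cs f)" using t(2) f(2) phi_cs[OF FQ.Ev_C[OF f(1)]] by simp
      moreover have "FQ.cs f \<in> Q.Ev" using f FQ.Q_even by simp
      ultimately show "Y \<in> leven (lquot FQ.Q (center FQ.Q))" unfolding QQ.Q_even by blast
    qed
    show "\<phi> ` lodd (lquot T (center T)) \<subseteq> lodd (lquot FQ.Q (center FQ.Q))"
    proof
      fix Y assume "Y \<in> \<phi> ` lodd (lquot T (center T))"
      then obtain t where t: "t \<in> T.Od" "Y = \<phi> (TT.cs t)" unfolding TT.Q_odd by blast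
      obtain f where f: "f \<in> FQ.Od" "\<alpha> f = t" using H.image_Od[OF surj t(1)] by blast
      have "Y = QQ.cs (FQ.cs f)" using t(2) f(2) phi_cs[OF FQ.Od_C[OF f(1)]] by simp
      moreover have "FQ.cs f \<in> Q.Od" using f FQ.Q_odd by simp
      ultimately show "Y \<in> lodd (lquot FQ.Q (center FQ.Q))" unfolding QQ.Q_odd by blast
    qed
    show "\<forall>X\<in>lcarrier (lquot T (center T)). \<forall>Y\<in>lcarrier (lquot T (center T)).
       \<phi> (ladd (lquot T (center T)) X Y) = ladd (lquot FQ.Q (center FQ.Q)) (\<phi> X) (\<phi> Y)"
      unfolding allX
    proof (intro ballI)
      fix f g assume fg: "f \<in> FQ.C" "g \<in> FQ.C"
      have "ladd (lquot T (center T)) (TT.cs (\<alpha> f)) (TT.cs (\<alpha> g)) = TT.cs (\<alpha> (FQ.add f g))"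
        using TT.Q_add aC fg H.h_add by simp
      moreover have "ladd (lquot FQ.Q (center FQ.Q)) (QQ.cs (FQ.cs f)) (QQ.cs (FQ.cs g)) = QQ.cs (FQ.cs (FQ.add f g))"
        using QQ.Q_add qC fg HQ.h_add by simp
      ultimately show "\<phi> (ladd (lquot T (center T)) (TT.cs (\<alpha> f)) (TT.cs (\<alpha> g))) =
           ladd (lquot FQ.Q (center FQ.Q)) (\<phi> (TT.cs (\<alpha> f))) (\<phi> (TT.cs (\<alpha> g)))"
        using phi_cs fg by simp
    qed
    show "\<forall>c. \<forall>X\<in>lcarrier (lquot T (center T)).
       \<phi> (lsmul (lquot T (center T)) c X) = lsmul (lquot FQ.Q (center FQ.Q)) c (\<phi> X)"
      unfolding allX
    proof (intro allI ballI)
      fix c f assume fg: "f \<in> FQ.C"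
      have "lsmul (lquot T (center T)) c (TT.cs (\<alpha> f)) = TT.cs (\<alpha> (FQ.sm c f))"
        using TT.Q_sm aC fg H.h_sm by simp
      moreover have "lsmul (lquot FQ.Q (center FQ.Q)) c (QQ.cs (FQ.cs f)) = QQ.cs (FQ.cs (FQ.sm c f))"
        using QQ.Q_sm qC fg HQ.h_sm by simp
      ultimately show "\<phi> (lsmul (lquot T (center T)) c (TT.cs (\<alpha> f))) =
           lsmul (lquot FQ.Q (center FQ.Q)) c (\<phi> (TT.cs (\<alpha> f)))"
        using phi_cs fg by simp
    qed
    show "\<forall>X\<in>lcarrier (lquot T (center T)). \<forall>Y\<in>lcarrier (lquot T (center T)).
       \<phi> (lbr (lquot T (center T)) X Y) = lbr (lquot FQ.Q (center FQ.Q)) (\<phi> X) (\<phi> Y)"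
      unfolding allX
    proof (intro ballI)
      fix f g assume fg: "f \<in> FQ.C" "g \<in> FQ.C"
      have "lbr (lquot T (center T)) (TT.cs (\<alpha> f)) (TT.cs (\<alpha> g)) = TT.cs (\<alpha> (FQ.br f g))"
        using TT.Q_br aC fg H.h_br by simp
      moreover have "lbr (lquot FQ.Q (center FQ.Q)) (QQ.cs (FQ.cs f)) (QQ.cs (FQ.cs g)) = QQ.cs (FQ.cs (FQ.br f g))"
        using QQ.Q_br qC fg HQ.h_br by simp
      ultimately show "\<phi> (lbr (lquot T (center T)) (TT.cs (\<alpha> f)) (TT.cs (\<alpha> g))) =
           lbr (lquot FQ.Q (center FQ.Q)) (\<phi> (TT.cs (\<alpha> f))) (\<phi> (TT.cs (\<alpha> g)))"
        using phi_cs fg by simp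
    qed
  qed
  have inj: "inj_on \<phi> (lcarrier (lquot T (center T)))"
  proof (rule inj_onI)
    fix X Y assume XY: "X \<in> lcarrier (lquot T (center T))" "Y \<in> lcarrier (lquot T (center T))" "\<phi> X = \<phi> Y"
    from XY(1) obtain f where f: "f \<in> FQ.C" "X = TT.cs (\<alpha> f)" unfolding TZ_carrier by (rule imageE)
    from XY(2) obtain g where g: "g \<in> FQ.C" "Y = TT.cs (\<alpha> g)" unfolding TZ_carrier by (rule imageE)
    have fg: "f \<in> FQ.C" "g \<in> FQ.C" "X = TT.cs (\<alpha> f)" "Y = TT.cs (\<alpha> g)" using f g by auto
    have "QQ.cs (FQ.cs f) = QQ.cs (FQ.cs g)" using phi_cs[OF f(1)] phi_cs[OF g(1)] XY(3) f(2) g(2) by simp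
    hence "Q.sub (FQ.cs f) (FQ.cs g) \<in> center FQ.Q" using QQ.cs_eq_iff qC fg by simp
    hence "FQ.cs (FQ.sub f g) \<in> center FQ.Q" using HQ.h_sub fg by simp
    hence "FQ.sub f g \<in> Cs" using c1[of "FQ.sub f g"] fg by simp
    hence "\<alpha> (FQ.sub f g) \<in> center T" using c2[of "FQ.sub f g"] fg by simp
    hence "T.sub (\<alpha> f) (\<alpha> g) \<in> center T" using H.h_sub fg by simp
    thus "X = Y" using TT.cs_eq_iff aC fg by simp
  qed
  have sur: "\<phi> ` lcarrier (lquot T (center T)) = lcarrier (lquot FQ.Q (center FQ.Q))"
  proof
    show "\<phi> ` lcarrier (lquot T (center T)) \<subseteq> lcarrier (lquot FQ.Q (center FQ.Q))"
      using hom[unfolded lhom_def, THEN conjunct1] .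
    show "lcarrier (lquot FQ.Q (center FQ.Q)) \<subseteq> \<phi> ` lcarrier (lquot T (center T))"
    proof
      fix Y assume "Y \<in> lcarrier (lquot FQ.Q (center FQ.Q))"
      then obtain y where y: "y \<in> Q.C" "Y = QQ.cs y" unfolding QQ.Q_carrier by (rule imageE)
      from y(1) obtain f where f: "f \<in> FQ.C" "y = FQ.cs f" unfolding FQ.Q_carrier by (rule imageE)
      have "Y = \<phi> (TT.cs (\<alpha> f))" using y f phi_cs by simp
      moreover have "TT.cs (\<alpha> f) \<in> lcarrier (lquot T (center T))" unfolding TZ_carrier using f(1) by (rule imageI)
      ultimately show "Y \<in> \<phi> ` lcarrier (lquot T (center T))" by (rule image_eqI)
    qed
  qed
  show ?thesis unfolding liso_def bij_betw_def using hom inj sur by blast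
qed

lemma derivedQ: "derived FQ.Q = FQ.cs ` derived F"
  using HQ.image_derived[OF FQ.proj_surj] by simp

lemma theta_liso: "liso (lrestrict T (derived T)) (lrestrict FQ.Q (derived FQ.Q)) \<theta>"
proof -
  have allt: "\<And>P. (\<forall>t\<in>derived T. P t) \<longleftrightarrow> (\<forall>f\<in>derived F. P (\<alpha> f))"
    unfolding derived_img[symmetric] by simp
  have dC: "\<And>f. f \<in> derived F \<Longrightarrow> f \<in> FQ.C" using FQ.derived_C by blast
  have ev: "\<exists>f\<in>derived F. f \<in> FQ.Ev \<and> \<alpha> f = t" if t: "t \<in> T.Ev" "t \<in> derived T" for t
  proof -
    have "t \<in> \<alpha> ` derived F" using t(2) derived_img by simp
    then obtain f0 where f0: "f0 \<in> derived F" "\<alpha> f0 = t" by (metis imageE)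
    obtain fe fo where fe: "fe \<in> derived F" "fe \<in> FQ.Ev" "fo \<in> derived F" "fo \<in> FQ.Od" "f0 = FQ.add fe fo"
      using FQ.derived_graded f0(1) unfolding FQ.graded_def by blast
    have "T.add (\<alpha> fe) (\<alpha> fo) = T.add t T.zr" using f0 fe H.h_add dC T.Ev_C t(1) by simp
    hence "\<alpha> fe = t" using T.decomp_unique[OF H.h_Ev[OF fe(2)] t(1) H.h_Od[OF fe(4)] T.zr_Od] by blast
    thus ?thesis using fe by blast
  qed
  have od: "\<exists>f\<in>derived F. f \<in> FQ.Od \<and> \<alpha> f = t" if t: "t \<in> T.Od" "t \<in> derived T" for t
  proof -
    have "t \<in> \<alpha> ` derived F" using t(2) derived_img by simp
    then obtain f0 where f0: "f0 \<in> derived F" "\<alpha> f0 = t" by (metis imageE)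
    obtain fe fo where fe: "fe \<in> derived F" "fe \<in> FQ.Ev" "fo \<in> derived F" "fo \<in> FQ.Od" "f0 = FQ.add fe fo"
      using FQ.derived_graded f0(1) unfolding FQ.graded_def by blast
    have "T.add (\<alpha> fe) (\<alpha> fo) = T.add T.zr t" using f0 fe H.h_add dC T.Od_C t(1) by simp
    hence "\<alpha> fo = t" using T.decomp_unique[OF H.h_Ev[OF fe(2)] T.zr_Ev H.h_Od[OF fe(4)] t(1)] by blast
    thus ?thesis using fe by blast
  qed
  have dsub: "subspace F (derived F)" using FQ.derived_subspace .
  have hom: "lhom (lrestrict T (derived T)) (lrestrict FQ.Q (derived FQ.Q)) \<theta>"
    unfolding lhom_def lrestrict_simps
  proof (intro conjI)
    show "\<theta> ` derived T \<subseteq> derived FQ.Q"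
    proof
      fix y assume "y \<in> \<theta> ` derived T"
      then obtain t where t: "t \<in> derived T" "y = \<theta> t" by (rule imageE)
      have "t \<in> \<alpha> ` derived F" using t(1) derived_img by simp
      then obtain f where f: "f \<in> derived F" "t = \<alpha> f" by (rule imageE)
      have "y = FQ.cs f" using t f theta_eq by simp
      thus "y \<in> derived FQ.Q" unfolding derivedQ using f(1) by (rule image_eqI)
    qed
    show "\<theta> ` (T.Ev \<inter> derived T) \<subseteq> Q.Ev \<inter> derived FQ.Q"
    proof
      fix y assume "y \<in> \<theta> ` (T.Ev \<inter> derived T)"
      then obtain t where t: "t \<in> T.Ev" "t \<in> derived T" "y = \<theta> t" by blast
      then obtain f where f: "f \<in> derived F" "f \<in> FQ.Ev" "\<alpha> f = t" using ev by blast
      have "y = FQ.cs f" using t f theta_eq by blast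
      thus "y \<in> Q.Ev \<inter> derived FQ.Q" unfolding FQ.Q_even derivedQ using f by blast
    qed
    show "\<theta> ` (T.Od \<inter> derived T) \<subseteq> Q.Od \<inter> derived FQ.Q"
    proof
      fix y assume "y \<in> \<theta> ` (T.Od \<inter> derived T)"
      then obtain t where t: "t \<in> T.Od" "t \<in> derived T" "y = \<theta> t" by blast
      then obtain f where f: "f \<in> derived F" "f \<in> FQ.Od" "\<alpha> f = t" using od by blast
      have "y = FQ.cs f" using t f theta_eq by blast
      thus "y \<in> Q.Od \<inter> derived FQ.Q" unfolding FQ.Q_odd derivedQ using f by blast
    qed
    show "\<forall>x\<in>derived T. \<forall>y\<in>derived T. \<theta> (T.add x y) = Q.add (\<theta> x) (\<theta> y)"
      unfolding allt
    proof (intro ballI)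
      fix f g assume fg: "f \<in> derived F" "g \<in> derived F"
      have "T.add (\<alpha> f) (\<alpha> g) = \<alpha> (FQ.add f g)" using H.h_add dC fg by simp
      moreover have "FQ.add f g \<in> derived F" using FQ.subspaceD(3)[OF dsub fg] .
      ultimately show "\<theta> (T.add (\<alpha> f) (\<alpha> g)) = Q.add (\<theta> (\<alpha> f)) (\<theta> (\<alpha> g))"
        using theta_eq fg HQ.h_add dC by simp
    qed
    show "\<forall>c. \<forall>x\<in>derived T. \<theta> (T.sm c x) = Q.sm c (\<theta> x)"
      unfolding allt
    proof (intro allI ballI)
      fix c f assume fg: "f \<in> derived F"
      have "T.sm c (\<alpha> f) = \<alpha> (FQ.sm c f)" using H.h_sm dC fg by simp
      moreover have "FQ.sm c f \<in> derived F" using FQ.subspaceD(4)[OF dsub fg] .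
      ultimately show "\<theta> (T.sm c (\<alpha> f)) = Q.sm c (\<theta> (\<alpha> f))"
        using theta_eq fg HQ.h_sm dC by simp
    qed
    show "\<forall>x\<in>derived T. \<forall>y\<in>derived T. \<theta> (T.br x y) = Q.br (\<theta> x) (\<theta> y)"
      unfolding allt
    proof (intro ballI)
      fix f g assume fg: "f \<in> derived F" "g \<in> derived F"
      have "T.br (\<alpha> f) (\<alpha> g) = \<alpha> (FQ.br f g)" using H.h_br dC fg by simp
      moreover have "FQ.br f g \<in> derived F" using FQ.br_in_derived dC fg by simp
      ultimately show "\<theta> (T.br (\<alpha> f) (\<alpha> g)) = Q.br (\<theta> (\<alpha> f)) (\<theta> (\<alpha> g))"
        using theta_eq fg HQ.h_br dC by simp
    qed
  qed
  have inj: "inj_on \<theta> (derived T)"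
  proof (rule inj_onI)
    fix x y assume xy: "x \<in> derived T" "y \<in> derived T" "\<theta> x = \<theta> y"
    have "x \<in> \<alpha> ` derived F" "y \<in> \<alpha> ` derived F" using xy derived_img by auto
    then obtain f g where fg: "f \<in> derived F" "g \<in> derived F" "x = \<alpha> f" "y = \<alpha> g"
      by (metis imageE)
    hence "\<theta> (\<alpha> f) = \<theta> (\<alpha> g)" using xy by simp
    hence "FQ.cs f = FQ.cs g" using theta_eq[OF fg(1)] theta_eq[OF fg(2)] by simp
    hence "FQ.sub f g \<in> I" using FQ.cs_eq_iff dC fg by simp
    hence "\<alpha> (FQ.sub f g) = T.zr" using killI by blast
    hence "T.sub (\<alpha> f) (\<alpha> g) = T.zr" using H.h_sub dC fg by simp
    thus "x = y" using fg H.h_C dC by simp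
  qed
  have sur: "\<theta> ` derived T = derived FQ.Q"
    unfolding derivedQ derived_img[symmetric] image_image using theta_eq by (auto intro!: image_cong)
  show ?thesis unfolding liso_def bij_betw_def lrestrict_simps using hom inj sur by blast
qed

lemma isoclinic: "isoclinic T FQ.Q"
  unfolding isoclinic_def
proof (intro exI conjI)
  show "liso (lquot T (center T)) (lquot FQ.Q (center FQ.Q)) \<phi>" by (rule phi_liso)
  show "liso (lrestrict T (derived T)) (lrestrict FQ.Q (derived FQ.Q)) \<theta>" by (rule theta_liso)
  show "\<forall>a\<in>T.C. \<forall>b\<in>T.C. \<forall>c\<in>Q.C. \<forall>d\<in>Q.C.
     \<phi> (TT.cs a) = QQ.cs c \<longrightarrow> \<phi> (TT.cs b) = QQ.cs d \<longrightarrow> \<theta> (T.br a b) = Q.br c d"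
  proof (intro ballI impI)
    fix a b c d assume ab: "a \<in> T.C" "b \<in> T.C" and cd: "c \<in> Q.C" "d \<in> Q.C"
      and e1: "\<phi> (TT.cs a) = QQ.cs c" and e2: "\<phi> (TT.cs b) = QQ.cs d"
    have "a \<in> \<alpha> ` FQ.C" "b \<in> \<alpha> ` FQ.C" using ab surj by auto
    then obtain f g where fg: "f \<in> FQ.C" "g \<in> FQ.C" "a = \<alpha> f" "b = \<alpha> g" by blast
    have "QQ.cs (FQ.cs f) = QQ.cs c" using e1 phi_cs fg by simp
    hence z1: "Q.sub (FQ.cs f) c \<in> center FQ.Q" using QQ.cs_eq_iff qC fg cd by simp
    have "QQ.cs (FQ.cs g) = QQ.cs d" using e2 phi_cs fg by simp
    hence z2: "Q.sub (FQ.cs g) d \<in> center FQ.Q" using QQ.cs_eq_iff qC fg cd by simp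
    have "Q.br c d = Q.br (FQ.cs f) (FQ.cs g)"
      using Q.br_center_shift[OF qC[OF fg(1)] cd(1) qC[OF fg(2)] cd(2) z1 z2] by simp
    also have "\<dots> = FQ.cs (FQ.br f g)" using HQ.h_br fg by simp
    also have "\<dots> = \<theta> (\<alpha> (FQ.br f g))" using theta_eq FQ.br_in_derived fg by simp
    also have "\<alpha> (FQ.br f g) = T.br a b" using H.h_br fg by simp
    finally show "\<theta> (T.br a b) = Q.br c d" by simp
  qed
qed

end

context VS begin

primrec lcv :: "(nat \<Rightarrow> 'k) \<Rightarrow> 'a list \<Rightarrow> 'a" where
  "lcv c [] = zr"
| "lcv c (v # vs) = add (sm (c 0) v) (lcv (\<lambda>i. c (Suc i)) vs)"

lemma lcv_C: "set vs \<subseteq> C \<Longrightarrow> lcv c vs \<in> C"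
  by (induction vs arbitrary: c) auto

lemma lcv_add: "set vs \<subseteq> C \<Longrightarrow> add (lcv c vs) (lcv d vs) = lcv (\<lambda>i. c i + d i) vs"
proof (induction vs arbitrary: c d)
  case Nil thus ?case by simp
next
  case (Cons v vs)
  have vC: "v \<in> C" and vsC: "set vs \<subseteq> C" using Cons.prems by auto
  have "add (lcv c (v # vs)) (lcv d (v # vs)) =
        add (add (sm (c 0) v) (sm (d 0) v)) (add (lcv (\<lambda>i. c (Suc i)) vs) (lcv (\<lambda>i. d (Suc i)) vs))"
    by (simp, rule add_4swap) (use vC lcv_C[OF vsC] in auto)
  also have "\<dots> = lcv (\<lambda>i. c i + d i) (v # vs)"
    using Cons.IH[OF vsC] vC by (simp add: sm_add_left)
  finally show ?case .
qed

lemma lcv_sm: "set vs \<subseteq> C \<Longrightarrow> sm k (lcv c vs) = lcv (\<lambda>i. k * c i) vs"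
proof (induction vs arbitrary: c)
  case Nil thus ?case by simp
next
  case (Cons v vs)
  have vC: "v \<in> C" and vsC: "set vs \<subseteq> C" using Cons.prems by auto
  have "sm k (lcv c (v # vs)) = add (sm k (sm (c 0) v)) (sm k (lcv (\<lambda>i. c (Suc i)) vs))"
    using sm_add_right[OF sm_closed[OF vC] lcv_C[OF vsC]] by simp
  also have "\<dots> = lcv (\<lambda>i. k * c i) (v # vs)" using Cons.IH[OF vsC] vC by simp
  finally show ?case .
qed

lemma lcv_zero: "set vs \<subseteq> C \<Longrightarrow> lcv (\<lambda>i. 0) vs = zr"
  by (induction vs) auto

lemma lcv_cong: "(\<And>i. i < length vs \<Longrightarrow> c i = d i) \<Longrightarrow> lcv c vs = lcv d vs"
proof (induction vs arbitrary: c d)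
  case Nil thus ?case by simp
next
  case (Cons v vs)
  have "c 0 = d 0" using Cons.prems[of 0] by simp
  moreover have "lcv (\<lambda>i. c (Suc i)) vs = lcv (\<lambda>i. d (Suc i)) vs"
    by (rule Cons.IH) (use Cons.prems in simp)
  ultimately show ?case by simp
qed

lemma lcv_gen: "set vs \<subseteq> C \<Longrightarrow> v \<in> set vs \<Longrightarrow> \<exists>c. lcv c vs = v"
proof (induction vs)
  case Nil thus ?case by simp
next
  case (Cons w vs)
  show ?case
  proof (cases "v = w")
    case True
    have "lcv (\<lambda>i. if i = 0 then 1 else 0) (w # vs) = v"
      using True Cons.prems lcv_zero by simp
    thus ?thesis by blast
  next
    case False
    then obtain c where c: "lcv c vs = v" using Cons by auto
    have "lcv (\<lambda>i. case i of 0 \<Rightarrow> 0 | Suc j \<Rightarrow> c j) (w # vs) = v"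
      using c Cons.prems lcv_C[of vs c] by auto
    thus ?thesis by blast
  qed
qed

end

context LSA begin

lemma lcv_span: assumes "set vs \<subseteq> C" "x \<in> lspan A (set vs)" shows "\<exists>c. lcv c vs = x"
  using assms(2,1)
proof (induction rule: lspan_induct)
  case sub
  have "subspace A {x \<in> C. \<exists>c. lcv c vs = x}"
  proof (rule subspace_collect)
    show "\<exists>c. lcv c vs = zr" using lcv_zero[OF assms(1)] by blast
  next
    fix x y assume "\<exists>c. lcv c vs = x" "\<exists>c. lcv c vs = y"
    then obtain c d where "lcv c vs = x" "lcv d vs = y" by blast
    thus "\<exists>c. lcv c vs = add x y" using lcv_add[OF assms(1)] by metis
  next
    fix k x assume "\<exists>c. lcv c vs = x"
    then obtain c where "lcv c vs = x" by blast
    thus "\<exists>c. lcv c vs = sm k x" using lcv_sm[OF assms(1)] by metis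
  qed
  thus ?case .
next
  case (gen s) thus ?case using lcv_gen[OF assms(1)] by blast
qed

lemma fd_injection:
  fixes cf :: "'w \<Rightarrow> nat \<Rightarrow> 'k"
  assumes fd: "fin_dim A" and cf: "\<And>n (c :: nat \<Rightarrow> 'k). \<exists>w. \<forall>i<n. cf w i = c i"
  shows "\<exists>g :: 'a \<Rightarrow> 'w. inj_on g C"
proof -
  obtain S where S: "finite S" "S \<subseteq> C" "C \<subseteq> lspan A S" using fd unfolding fin_dim_def by blast
  obtain vs where vs: "set vs = S" using finite_list[OF S(1)] by blast
  let ?n = "length vs"
  have ex: "\<exists>w. lcv (cf w) vs = x" if "x \<in> C" for x
  proof -
    have "x \<in> lspan A (set vs)" using S(3) that vs by blast
    then obtain c where c: "lcv c vs = x" using lcv_span[of vs x] vs S(2) by blast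
    obtain w where w: "\<forall>i<?n. cf w i = c i" using cf by blast
    have "lcv (cf w) vs = lcv c vs" by (rule lcv_cong) (use w in simp)
    thus ?thesis using c by blast
  qed
  define g where "g x = (SOME w. lcv (cf w) vs = x)" for x
  have "lcv (cf (g x)) vs = x" if "x \<in> C" for x
    unfolding g_def using someI_ex[OF ex[OF that]] .
  hence "inj_on g C" unfolding inj_on_def by metis
  thus ?thesis by blast
qed

end

definition transport :: "('a, 'k) lsa \<Rightarrow> ('a \<Rightarrow> 'b) \<Rightarrow> ('b, 'k) lsa" where
  "transport A g = \<lparr>lcarrier = g ` lcarrier A, leven = g ` leven A, lodd = g ` lodd A,
     lzero = g (lzero A),
     ladd = (\<lambda>x y. g (ladd A (inv_into (lcarrier A) g x) (inv_into (lcarrier A) g y))),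
     lsmul = (\<lambda>c x. g (lsmul A c (inv_into (lcarrier A) g x))),
     lbr = (\<lambda>x y. g (lbr A (inv_into (lcarrier A) g x) (inv_into (lcarrier A) g y)))\<rparr>"

locale TR = LSA A for A :: "('a, 'k::field) lsa" +
  fixes g :: "'a \<Rightarrow> 'b"
  assumes inj: "inj_on g (lcarrier A)"
begin

abbreviation "Tr \<equiv> transport A g"

lemma gi: "x \<in> C \<Longrightarrow> inv_into C g (g x) = x" using inv_into_f_f[OF inj] .

lemma Tr_carrier: "lcarrier Tr = g ` C" unfolding transport_def by simp
lemma Tr_even: "leven Tr = g ` Ev" unfolding transport_def by simp
lemma Tr_odd: "lodd Tr = g ` Od" unfolding transport_def by simp
lemma Tr_zero: "lzero Tr = g zr" unfolding transport_def by simp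
lemma Tr_add: "x \<in> C \<Longrightarrow> y \<in> C \<Longrightarrow> ladd Tr (g x) (g y) = g (add x y)"
  unfolding transport_def by (simp add: gi)
lemma Tr_sm: "x \<in> C \<Longrightarrow> lsmul Tr c (g x) = g (sm c x)"
  unfolding transport_def by (simp add: gi)
lemma Tr_br: "x \<in> C \<Longrightarrow> y \<in> C \<Longrightarrow> lbr Tr (g x) (g y) = g (br x y)"
  unfolding transport_def by (simp add: gi)
lemma g_eq: "x \<in> C \<Longrightarrow> y \<in> C \<Longrightarrow> g x = g y \<longleftrightarrow> x = y"
  using inj unfolding inj_on_def by blast

lemma homog_Tr_iff: "homog Tr d X \<longleftrightarrow> (\<exists>x. homog A d x \<and> X = g x)"
  unfolding homog_def Tr_even Tr_odd by (cases d) auto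

lemma Tr_lsa: "lie_superalgebra Tr"
proof -
  have vs: "vspace Tr" unfolding vspace_def Tr_carrier Tr_zero
    apply (simp add: Tr_add Tr_sm add_assoc sm_add_left sm_add_right)
    using add_comm by auto
  have subE: "subspace Tr (leven Tr)" unfolding subspace_def Tr_carrier Tr_even Tr_zero
    using Ev_C by (auto simp: Tr_add Tr_sm Ev_add Ev_sm)
  have subO: "subspace Tr (lodd Tr)" unfolding subspace_def Tr_carrier Tr_odd Tr_zero
    using Od_C by (auto simp: Tr_add Tr_sm Od_add Od_sm)
  have EO: "leven Tr \<inter> lodd Tr = {lzero Tr}"
  proof
    show "{lzero Tr} \<subseteq> leven Tr \<inter> lodd Tr" unfolding Tr_even Tr_odd Tr_zero by auto
    show "leven Tr \<inter> lodd Tr \<subseteq> {lzero Tr}"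
    proof
      fix X assume "X \<in> leven Tr \<inter> lodd Tr"
      then obtain e u where eu: "e \<in> Ev" "u \<in> Od" "X = g e" "g e = g u"
        unfolding Tr_even Tr_odd by auto
      have "e = u" using g_eq Ev_C Od_C eu by blast
      hence "e = zr" using eu Ev_Od_zero by simp
      thus "X \<in> {lzero Tr}" using eu(3) Tr_zero by simp
    qed
  qed
  have dec: "\<forall>X\<in>lcarrier Tr. \<exists>E\<in>leven Tr. \<exists>U\<in>lodd Tr. X = ladd Tr E U"
    unfolding Tr_carrier Tr_even Tr_odd
  proof (simp, intro ballI)
    fix x assume "x \<in> C"
    then obtain e u where "e \<in> Ev" "u \<in> Od" "x = add e u" using decomp by blast
    thus "\<exists>e\<in>Ev. \<exists>u\<in>Od. g x = ladd Tr (g e) (g u)" using Tr_add Ev_C Od_C by metis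
  qed
  have brc: "\<forall>X\<in>lcarrier Tr. \<forall>Y\<in>lcarrier Tr. lbr Tr X Y \<in> lcarrier Tr"
    unfolding Tr_carrier by (simp add: Tr_br)
  have bra: "\<forall>X\<in>lcarrier Tr. \<forall>Y\<in>lcarrier Tr. \<forall>Z\<in>lcarrier Tr.
        lbr Tr (ladd Tr X Y) Z = ladd Tr (lbr Tr X Z) (lbr Tr Y Z) \<and>
        lbr Tr Z (ladd Tr X Y) = ladd Tr (lbr Tr Z X) (lbr Tr Z Y)"
    unfolding Tr_carrier by (simp add: Tr_br Tr_add br_add_left br_add_right)
  have brs: "\<forall>c. \<forall>X\<in>lcarrier Tr. \<forall>Y\<in>lcarrier Tr.
        lbr Tr (lsmul Tr c X) Y = lsmul Tr c (lbr Tr X Y) \<and>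
        lbr Tr X (lsmul Tr c Y) = lsmul Tr c (lbr Tr X Y)"
    unfolding Tr_carrier by (simp add: Tr_br Tr_sm br_sm_left br_sm_right)
  have par: "\<forall>d e X Y. homog Tr d X \<longrightarrow> homog Tr e Y \<longrightarrow> homog Tr (d \<noteq> e) (lbr Tr X Y)"
  proof (intro allI impI)
    fix d e X Y assume "homog Tr d X" "homog Tr e Y"
    then obtain x y where xy: "homog A d x" "X = g x" "homog A e y" "Y = g y"
      unfolding homog_Tr_iff by blast
    have "lbr Tr X Y = g (br x y)" using xy Tr_br homog_C by simp
    thus "homog Tr (d \<noteq> e) (lbr Tr X Y)" unfolding homog_Tr_iff using br_parity xy by blast
  qed
  have skw: "\<forall>d e X Y. homog Tr d X \<longrightarrow> homog Tr e Y \<longrightarrow> lbr Tr X Y = lsmul Tr (- gsign d e) (lbr Tr Y X)"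
  proof (intro allI impI)
    fix d e X Y assume "homog Tr d X" "homog Tr e Y"
    then obtain x y where xy: "homog A d x" "X = g x" "homog A e y" "Y = g y"
      unfolding homog_Tr_iff by blast
    have C: "x \<in> C" "y \<in> C" using xy homog_C by auto
    have "lbr Tr X Y = g (br x y)" using xy Tr_br C by simp
    also have "\<dots> = g (sm (- gsign d e) (br y x))" using br_skew[OF xy(1) xy(3)] by simp
    also have "\<dots> = lsmul Tr (- gsign d e) (lbr Tr Y X)" using xy Tr_br Tr_sm C by simp
    finally show "lbr Tr X Y = lsmul Tr (- gsign d e) (lbr Tr Y X)" .
  qed
  have jac: "\<forall>d e f X Y Z. homog Tr d X \<longrightarrow> homog Tr e Y \<longrightarrow> homog Tr f Z \<longrightarrow>
        ladd Tr (ladd Tr (lsmul Tr (gsign d f) (lbr Tr X (lbr Tr Y Z)))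
                        (lsmul Tr (gsign e d) (lbr Tr Y (lbr Tr Z X))))
               (lsmul Tr (gsign f e) (lbr Tr Z (lbr Tr X Y))) = lzero Tr"
  proof (intro allI impI)
    fix d e f X Y Z assume "homog Tr d X" "homog Tr e Y" "homog Tr f Z"
    then obtain x y z where xy: "homog A d x" "X = g x" "homog A e y" "Y = g y" "homog A f z" "Z = g z"
      unfolding homog_Tr_iff by blast
    have C: "x \<in> C" "y \<in> C" "z \<in> C" using xy homog_C by auto
    have J: "add (add (sm (gsign d f) (br x (br y z))) (sm (gsign e d) (br y (br z x))))
               (sm (gsign f e) (br z (br x y))) = zr"
      using L_jacobi xy by blast
    show "ladd Tr (ladd Tr (lsmul Tr (gsign d f) (lbr Tr X (lbr Tr Y Z)))
                        (lsmul Tr (gsign e d) (lbr Tr Y (lbr Tr Z X))))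
               (lsmul Tr (gsign f e) (lbr Tr Z (lbr Tr X Y))) = lzero Tr"
      using J C unfolding xy(2,4,6) Tr_zero by (simp add: Tr_br Tr_sm Tr_add)
  qed
  show ?thesis unfolding lie_superalgebra_def
    using vs subE subO EO dec brc bra brs par skw jac by blast
qed

lemma Tr_hom: "lhom A Tr g"
  unfolding lhom_def Tr_carrier Tr_even Tr_odd
  using Ev_C Od_C by (auto simp: Tr_add Tr_sm Tr_br)

lemma Tr_liso: "liso A Tr g"
  unfolding liso_def bij_betw_def using Tr_hom inj Tr_carrier by simp

end

lemma (in HOM) fd_preimage:
  assumes fd: "fin_dim B" and surj: "h ` A.C = B.C"
    and ker: "lkernel A B h \<subseteq> derived A \<inter> center A"
  shows "fin_dim A"
proof -
  obtain S where S: "finite S" "S \<subseteq> B.C" "B.C \<subseteq> lspan B S" using fd unfolding fin_dim_def by blast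
  define pre where "pre = inv_into A.C h"
  have pre: "pre y \<in> A.C" "h (pre y) = y" if "y \<in> B.C" for y
  proof -
    have "y \<in> h ` A.C" using surj that by simp
    thus "pre y \<in> A.C" "h (pre y) = y" unfolding pre_def by (auto intro: inv_into_into f_inv_into_f)
  qed
  define P where "P = pre ` S"
  have PC: "P \<subseteq> A.C" unfolding P_def using pre S(2) by blast
  have hP: "h ` P = S" unfolding P_def image_image using pre(2) S(2) by (auto intro!: image_cong) (metis image_eqI pre(2) subsetD)
  have spanC: "lspan A P \<subseteq> A.C" using A.lspan_in_C[OF PC] .
  have lift: "\<exists>a'\<in>lspan A P. A.sub a a' \<in> lkernel A B h" if a: "a \<in> A.C" for a
  proof -
    have "h a \<in> lspan B S" using S(3) h_C[OF a] by blast
    hence "h a \<in> h ` lspan A P" using image_span[OF PC] hP by simp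
    then obtain a' where a': "a' \<in> lspan A P" "h a = h a'" by (metis imageE)
    have a'C: "a' \<in> A.C" using a'(1) spanC by blast
    have "h (A.sub a a') = B.zr" using h_sub[OF a a'C] a'(2) h_C[OF a'C] by simp
    thus ?thesis unfolding lkernel_def using a a'C a'(1) by auto
  qed
  have BPC: "A.brset P P \<subseteq> A.C" using A.brset_C[OF PC PC] .
  have der: "derived A \<subseteq> lspan A (A.brset P P)"
  proof
    fix x assume "x \<in> derived A"
    thus "x \<in> lspan A (A.brset P P)"
    proof (induction rule: A.derived_induct)
      case sub
      have "subspace A (lspan A (A.brset P P))" using A.lspan_subspace[OF BPC] .
      moreover have "lspan A (A.brset P P) \<subseteq> A.C" using A.lspan_in_C[OF BPC] .
      ultimately show ?case by (simp add: Int_absorb1 Collect_mem_eq[symmetric] Int_def[symmetric])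
    next
      case (gen a b)
      obtain a' where a': "a' \<in> lspan A P" "A.sub a a' \<in> lkernel A B h" using lift[OF gen(1)] by blast
      obtain b' where b': "b' \<in> lspan A P" "A.sub b b' \<in> lkernel A B h" using lift[OF gen(2)] by blast
      have C': "a' \<in> A.C" "b' \<in> A.C" using a'(1) b'(1) spanC by auto
      have "A.br a b = A.br a' b'"
        using A.br_center_shift[OF gen(1) C'(1) gen(2) C'(2)] a'(2) b'(2) ker by blast
      thus ?case using A.br_span_span[OF PC PC a'(1) b'(1)] by simp
    qed
  qed
  define G where "G = P \<union> A.brset P P"
  have finP: "finite P" unfolding P_def using S(1) by simp
  have "A.brset P P = (\<lambda>(u, v). A.br u v) ` (P \<times> P)" unfolding A.brset_def by auto
  hence finG: "finite G" unfolding G_def using finP by simp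
  have GC: "G \<subseteq> A.C" unfolding G_def using PC BPC by blast
  have sG: "subspace A (lspan A G)" using A.lspan_subspace[OF GC] .
  have "A.C \<subseteq> lspan A G"
  proof
    fix a assume a: "a \<in> A.C"
    obtain a' where a': "a' \<in> lspan A P" "A.sub a a' \<in> lkernel A B h" using lift[OF a] by blast
    have a'C: "a' \<in> A.C" using a'(1) spanC by blast
    have 1: "a' \<in> lspan A G" using a'(1) A.lspan_mono[of P G] GC unfolding G_def by blast
    have 2: "A.sub a a' \<in> lspan A G" using a'(2) ker der A.lspan_mono[of "A.brset P P" G] GC
      unfolding G_def by blast
    have "a = A.add a' (A.sub a a')" using a a'C by simp
    thus "a \<in> lspan A G" using A.subspaceD(3)[OF sG 1 2] by simp
  qed
  thus ?thesis unfolding fin_dim_def using finG GC by blast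
qed

lemma inC_fd:
  assumes "lie_superalgebra L" "fin_dim L" "inC L A lam"
  shows "fin_dim A"
proof -
  interpret HOM A L lam using assms unfolding inC_def by unfold_locales auto
  show ?thesis using fd_preimage assms unfolding inC_def by blast
qed

lemma (in TR) inC_transport:
  assumes L: "lie_superalgebra L" and inc: "inC L A lam"
  shows "inC L Tr (lam \<circ> inv_into C g)"
proof -
  interpret Tx: LSA Tr using Tr_lsa by unfold_locales
  interpret H: HOM A L lam using inc L unfolding inC_def by unfold_locales auto
  interpret G: HOM A Tr g using Tr_hom by unfold_locales
  have gi: "lhom Tr A (inv_into C g)" using liso_inv(1)[OF Tr_liso lsa Tr_lsa] .
  have hom: "lhom Tr L (lam \<circ> inv_into C g)" using lhom_comp[OF gi H.hom] .
  have gsurj: "g ` C = lcarrier Tr" using Tr_carrier by simp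
  have surjL: "lam ` C = lcarrier L" using inc unfolding inC_def by blast
  have ker: "lkernel A L lam \<subseteq> derived A \<inter> center A" using inc unfolding inC_def by blast
  have img: "(lam \<circ> inv_into C g) ` lcarrier Tr = lcarrier L"
    unfolding Tr_carrier image_comp[symmetric] using surjL
    by (simp add: image_comp) (metis (no_types, lifting) gi image_cong inv_into_f_f[OF inj] image_comp comp_apply)
  have kerTr: "lkernel Tr L (lam \<circ> inv_into C g) \<subseteq> g ` lkernel A L lam"
  proof
    fix y assume "y \<in> lkernel Tr L (lam \<circ> inv_into C g)"
    hence y: "y \<in> g ` C" "lam (inv_into C g y) = lzero L" unfolding lkernel_def Tr_carrier by auto
    then obtain x where x: "x \<in> C" "y = g x" by blast
    hence "x \<in> lkernel A L lam" using y(2) inv_into_f_f[OF inj x(1)] unfolding lkernel_def by simp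
    thus "y \<in> g ` lkernel A L lam" using x(2) by blast
  qed
  have "g ` lkernel A L lam \<subseteq> derived Tr \<inter> center Tr"
  proof
    fix y assume "y \<in> g ` lkernel A L lam"
    then obtain x where x: "x \<in> lkernel A L lam" "y = g x" by blast
    have "x \<in> derived A" "x \<in> center A" using x ker by auto
    hence "g x \<in> derived Tr" "g x \<in> center Tr"
      using G.image_derived[OF gsurj] G.image_center[OF gsurj] by auto
    thus "y \<in> derived Tr \<inter> center Tr" using x by simp
  qed
  thus ?thesis unfolding inC_def using Tr_lsa hom img kerTr by blast
qed

primrec spine :: "nat \<Rightarrow> 'x option tree" where
  "spine 0 = Leaf"
| "spine (Suc n) = Node Leaf None (spine n)"

lemma size_spine[simp]: "size (spine n) = n" by (induction n) auto

lemma cf_tree: "\<exists>w :: 'x option tree \<Rightarrow> 'k. \<forall>i<n. w (spine i) = c i"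
  by (rule exI[of _ "\<lambda>t. c (size t)"]) simp

lemma cf_list: "\<exists>w :: 'k list. \<forall>i<n. w ! i = c i"
  by (rule exI[of _ "map c [0..<n]"]) simp

locale MAIN = Lx: LSA L + Fx: LSA F for L :: "('l, 'k::field) lsa" and F :: "('f, 'k) lsa" +
  fixes X0 X1 :: "'x set" and \<iota> :: "'x \<Rightarrow> 'f" and \<pi> :: "'f \<Rightarrow> 'l"
    and T :: "('t, 'k) lsa" and \<sigma> :: "'t \<Rightarrow> 'l"
  assumes fd: "fin_dim L" and free: "free_lsa F X0 X1 \<iota>"
    and hom: "lhom F L \<pi>" and surj: "\<pi> ` lcarrier F = lcarrier L"
    and univ: "universal_C L T \<sigma>"
begin

lemma incT: "inC L T \<sigma>" using univ unfolding universal_C_def by blast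

sublocale Tx: LSA T using incT unfolding inC_def by unfold_locales blast
sublocale HP: HOM F L \<pi> using hom by unfold_locales
sublocale HS: HOM T L \<sigma> using incT unfolding inC_def by unfold_locales blast

lemma sig_surj: "\<sigma> ` Tx.C = Lx.C" using incT unfolding inC_def by blast
lemma sig_ker: "lkernel T L \<sigma> \<subseteq> derived T \<inter> center T" using incT unfolding inC_def by blast

lemma T_fd: "fin_dim T" using inC_fd[OF Lx.lsa fd incT] .

definition "R = lkernel F L \<pi>"
definition "I = lbrs F Fx.C R"

lemma R_ideal: "Fx.ideal R" unfolding R_def using HP.kernel_ideal .
lemma R_C: "R \<subseteq> Fx.C" using Fx.idealD(5)[OF R_ideal] .

lemma I_sub_R: "I \<subseteq> R"
proof -
  have "Fx.brset Fx.C R \<subseteq> R" unfolding Fx.brset_def using Fx.idealD(3)[OF R_ideal] by blast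
  thus ?thesis unfolding I_def Fx.lbrs_eq using Fx.lspan_least Fx.idealD(1)[OF R_ideal] by blast
qed

lemma I_ideal: "Fx.ideal I"
proof (rule Fx.idealI)
  show "subspace F I" unfolding I_def using Fx.lbrs_subspace R_C by blast
  show "Fx.graded I" unfolding I_def
    using Fx.lbrs_graded[OF Fx.subspace_C Fx.graded_C Fx.idealD(1)[OF R_ideal] Fx.idealD(2)[OF R_ideal]] .
next
  fix x v assume "x \<in> Fx.C" "v \<in> I"
  hence "Fx.br x v \<in> Fx.brset Fx.C R" unfolding Fx.brset_def using I_sub_R by blast
  thus "Fx.br x v \<in> I" unfolding I_def Fx.lbrs_eq using Fx.lspan_sup by blast
qed

lemma free_parts: "lie_superalgebra F" "X0 \<inter> X1 = {}" "\<iota> ` X0 \<subseteq> Fx.Ev" "\<iota> ` X1 \<subseteq> Fx.Od"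
  "Fx.C = lgen F (\<iota> ` (X0 \<union> X1))"
  using free unfolding free_lsa_def by blast+

lemma free_univ:
  "\<And>(M :: ('x option tree \<Rightarrow> 'k, 'k) lsa) f. lie_superalgebra M \<Longrightarrow> f ` X0 \<subseteq> leven M \<Longrightarrow> f ` X1 \<subseteq> lodd M \<Longrightarrow>
        (\<exists>h. lhom F M h \<and> (\<forall>x\<in>X0 \<union> X1. h (\<iota> x) = f x))"
  using free unfolding free_lsa_def by blast

definition "lift x = (if x \<in> X0 then (SOME t. t \<in> Tx.Ev \<and> \<sigma> t = \<pi> (\<iota> x))
                      else (SOME t. t \<in> Tx.Od \<and> \<sigma> t = \<pi> (\<iota> x)))"

lemma lift0: assumes "x \<in> X0" shows "lift x \<in> Tx.Ev" "\<sigma> (lift x) = \<pi> (\<iota> x)"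
proof -
  have "\<iota> x \<in> Fx.Ev" using free_parts(3) assms by blast
  hence "\<pi> (\<iota> x) \<in> Lx.Ev" using HP.h_Ev by blast
  hence "\<exists>t. t \<in> Tx.Ev \<and> \<sigma> t = \<pi> (\<iota> x)" using HS.image_Ev[OF sig_surj] by blast
  hence "lift x \<in> Tx.Ev \<and> \<sigma> (lift x) = \<pi> (\<iota> x)" unfolding lift_def using assms by (simp add: someI_ex[where P="\<lambda>t. t \<in> Tx.Ev \<and> \<sigma> t = \<pi> (\<iota> x)"])
  thus "lift x \<in> Tx.Ev" "\<sigma> (lift x) = \<pi> (\<iota> x)" by auto
qed

lemma lift1: assumes "x \<in> X1" shows "lift x \<in> Tx.Od" "\<sigma> (lift x) = \<pi> (\<iota> x)"
proof -
  have nx: "x \<notin> X0" using free_parts(2) assms by blast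
  have "\<iota> x \<in> Fx.Od" using free_parts(4) assms by blast
  hence "\<pi> (\<iota> x) \<in> Lx.Od" using HP.h_Od by blast
  hence "\<exists>t. t \<in> Tx.Od \<and> \<sigma> t = \<pi> (\<iota> x)" using HS.image_Od[OF sig_surj] by blast
  hence "lift x \<in> Tx.Od \<and> \<sigma> (lift x) = \<pi> (\<iota> x)" unfolding lift_def using nx by (simp add: someI_ex[where P="\<lambda>t. t \<in> Tx.Od \<and> \<sigma> t = \<pi> (\<iota> x)"])
  thus "lift x \<in> Tx.Od" "\<sigma> (lift x) = \<pi> (\<iota> x)" by auto
qed

lemma alpha_exists: "\<exists>\<alpha>. lhom F T \<alpha> \<and> (\<forall>f\<in>Fx.C. \<sigma> (\<alpha> f) = \<pi> f)"
proof -
  obtain gT :: "'t \<Rightarrow> ('x option tree \<Rightarrow> 'k)" where inj: "inj_on gT Tx.C"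
    using Tx.fd_injection[OF T_fd, of "\<lambda>w i. w (spine i)"] cf_tree by blast
  interpret TR T gT using inj by unfold_locales
  define f where "f x = gT (lift x)" for x
  have "f ` X0 \<subseteq> leven Tr" unfolding f_def Tr_even using lift0 by blast
  moreover have "f ` X1 \<subseteq> lodd Tr" unfolding f_def Tr_odd using lift1 by blast
  ultimately obtain h where h: "lhom F Tr h" "\<forall>x\<in>X0 \<union> X1. h (\<iota> x) = f x"
    using free_univ[OF Tr_lsa] by blast
  define \<alpha> where "\<alpha> = inv_into Tx.C gT \<circ> h"
  have ahom: "lhom F T \<alpha>" unfolding \<alpha>_def using lhom_comp[OF h(1) liso_inv(1)[OF Tr_liso Tx.lsa Tr_lsa]] .
  have liftC: "lift x \<in> Tx.C" if "x \<in> X0 \<union> X1" for x using lift0 lift1 that Tx.Ev_C Tx.Od_C by blast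
  have agen: "\<alpha> (\<iota> x) = lift x" if "x \<in> X0 \<union> X1" for x
    unfolding \<alpha>_def using h(2) that gi[OF liftC[OF that]] f_def by simp
  have sa: "lhom F L (\<sigma> \<circ> \<alpha>)" using lhom_comp[OF ahom HS.hom] .
  have "\<pi> f = (\<sigma> \<circ> \<alpha>) f" if "f \<in> Fx.C" for f
  proof (rule HP.hom_agree_lgen[OF sa])
    show "\<iota> ` (X0 \<union> X1) \<subseteq> Fx.C" using free_parts(3,4) Fx.Ev_C Fx.Od_C by blast
    show "f \<in> lgen F (\<iota> ` (X0 \<union> X1))" using that free_parts(5) by simp
  next
    fix s assume "s \<in> \<iota> ` (X0 \<union> X1)"
    then obtain x where x: "x \<in> X0 \<union> X1" "s = \<iota> x" by blast
    have "\<sigma> (lift x) = \<pi> (\<iota> x)" using lift0 lift1 x(1) by blast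
    thus "\<pi> s = (\<sigma> \<circ> \<alpha>) s" using agen x by simp
  qed
  thus ?thesis using ahom by auto
qed

end

context MAIN begin

definition "\<alpha> = (SOME \<alpha>. lhom F T \<alpha> \<and> (\<forall>f\<in>Fx.C. \<sigma> (\<alpha> f) = \<pi> f))"

lemma alpha: "lhom F T \<alpha>" "\<And>f. f \<in> Fx.C \<Longrightarrow> \<sigma> (\<alpha> f) = \<pi> f"
proof -
  have "lhom F T \<alpha> \<and> (\<forall>f\<in>Fx.C. \<sigma> (\<alpha> f) = \<pi> f)"
    unfolding \<alpha>_def using someI_ex[OF alpha_exists] .
  thus "lhom F T \<alpha>" "\<And>f. f \<in> Fx.C \<Longrightarrow> \<sigma> (\<alpha> f) = \<pi> f" by auto
qed

sublocale HA: HOM F T \<alpha> using alpha(1) by unfold_locales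

lemma ker_center: "x \<in> lkernel T L \<sigma> \<Longrightarrow> x \<in> center T" using sig_ker by blast
lemma ker_derived: "x \<in> lkernel T L \<sigma> \<Longrightarrow> x \<in> derived T" using sig_ker by blast

lemma pre_alpha: assumes t: "t \<in> Tx.C" shows "\<exists>f\<in>Fx.C. Tx.sub t (\<alpha> f) \<in> lkernel T L \<sigma>"
proof -
  have "\<sigma> t \<in> \<pi> ` Fx.C" using surj HS.h_C[OF t] by simp
  then obtain f where f: "f \<in> Fx.C" "\<sigma> t = \<pi> f" by (metis imageE)
  have af: "\<alpha> f \<in> Tx.C" using HA.h_C[OF f(1)] .
  have "\<sigma> (Tx.sub t (\<alpha> f)) = Lx.zr" using HS.h_sub[OF t af] alpha(2)[OF f(1)] f(2) HP.h_C[OF f(1)] by simp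
  thus ?thesis unfolding lkernel_def using f(1) t af by auto
qed

lemma alpha_surj: "\<alpha> ` Fx.C = Tx.C"
proof -
  let ?V = "\<alpha> ` Fx.C"
  have sV: "subspace T ?V" using HA.image_subspace[OF Fx.subspace_C] .
  have VC: "?V \<subseteq> Tx.C" using Tx.subspaceD(1)[OF sV] .
  have der: "derived T \<subseteq> ?V"
  proof
    fix x assume "x \<in> derived T"
    thus "x \<in> ?V"
    proof (induction rule: Tx.derived_induct)
      case sub
      have "{x \<in> Tx.C. x \<in> ?V} = ?V" using VC by blast
      thus ?case using sV by simp
    next
      case (gen a b)
      obtain f where f: "f \<in> Fx.C" "Tx.sub a (\<alpha> f) \<in> lkernel T L \<sigma>" using pre_alpha[OF gen(1)] by blast
      obtain g where g: "g \<in> Fx.C" "Tx.sub b (\<alpha> g) \<in> lkernel T L \<sigma>" using pre_alpha[OF gen(2)] by blast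
      have "Tx.br a b = Tx.br (\<alpha> f) (\<alpha> g)"
        using Tx.br_center_shift[OF gen(1) HA.h_C[OF f(1)] gen(2) HA.h_C[OF g(1)]] f(2) g(2) ker_center by blast
      also have "\<dots> = \<alpha> (Fx.br f g)" using HA.h_br f g by simp
      finally show ?case using f g by simp
    qed
  qed
  have "Tx.C \<subseteq> ?V"
  proof
    fix t assume t: "t \<in> Tx.C"
    obtain f where f: "f \<in> Fx.C" "Tx.sub t (\<alpha> f) \<in> lkernel T L \<sigma>" using pre_alpha[OF t] by blast
    have "Tx.sub t (\<alpha> f) \<in> ?V" using f(2) ker_derived der by blast
    moreover have "\<alpha> f \<in> ?V" using f(1) by blast
    ultimately have "Tx.add (\<alpha> f) (Tx.sub t (\<alpha> f)) \<in> ?V" using Tx.subspaceD(3)[OF sV] by blast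
    thus "t \<in> ?V" using t HA.h_C[OF f(1)] by simp
  qed
  thus ?thesis using VC by blast
qed

lemma killI: assumes i: "i \<in> I" shows "\<alpha> i = Tx.zr"
proof -
  have BC: "Fx.brset Fx.C R \<subseteq> Fx.C" using Fx.brset_C R_C by blast
  have "i \<in> lspan F (Fx.brset Fx.C R)" using i unfolding I_def Fx.lbrs_eq .
  thus ?thesis using BC
  proof (induction rule: Fx.lspan_induct)
    case sub
    show ?case using HA.preimage_subspace[OF HA.zero_subspace] by simp
  next
    case (gen s)
    then obtain f r where fr: "f \<in> Fx.C" "r \<in> R" "s = Fx.br f r" unfolding Fx.brset_def by blast
    have rC: "r \<in> Fx.C" using fr(2) R_C by blast
    have "\<sigma> (\<alpha> r) = Lx.zr" using alpha(2)[OF rC] fr(2) unfolding R_def lkernel_def by simp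
    hence "\<alpha> r \<in> center T" using ker_center HA.h_C[OF rC] unfolding lkernel_def by blast
    hence "Tx.br (\<alpha> f) (\<alpha> r) = Tx.zr" using Tx.center_right HA.h_C[OF fr(1)] by blast
    thus ?case using HA.h_br[OF fr(1) rC] fr(3) by simp
  qed
qed

end

context LSA begin

lemma complement_exists:
  assumes sR: "subspace A R" and gR: "graded R" and sI: "subspace A I" and gI: "graded I"
    and IR: "I \<subseteq> R" and sW: "subspace A W"
  shows "\<exists>M. subspace A M \<and> graded M \<and> I \<subseteq> M \<and> M \<subseteq> R \<and> M \<inter> W \<subseteq> I \<and>
             (\<forall>r\<in>R. \<exists>m\<in>M. \<exists>w\<in>W. r = add m w)"
proof -
  define SS where "SS = {S. subspace A S \<and> graded S \<and> I \<subseteq> S \<and> S \<subseteq> R \<and> S \<inter> W \<subseteq> I}"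
  have RC: "R \<subseteq> C" using subspaceD(1)[OF sR] .
  have I_SS: "I \<in> SS" unfolding SS_def using sI gI IR by blast
  have "\<forall>CC\<in>chains SS. \<exists>U\<in>SS. \<forall>X\<in>CC. X \<subseteq> U"
  proof
    fix CC assume CC: "CC \<in> chains SS"
    hence sub: "CC \<subseteq> SS" and ch: "\<And>X Y. X \<in> CC \<Longrightarrow> Y \<in> CC \<Longrightarrow> X \<subseteq> Y \<or> Y \<subseteq> X"
      unfolding chains_def chain_subset_def by auto
    show "\<exists>U\<in>SS. \<forall>X\<in>CC. X \<subseteq> U"
    proof (cases "CC = {}")
      case True thus ?thesis using I_SS by blast
    next
      case False
      then obtain S0 where S0: "S0 \<in> CC" by blast
      have mem: "\<And>S. S \<in> CC \<Longrightarrow> subspace A S \<and> graded S \<and> I \<subseteq> S \<and> S \<subseteq> R \<and> S \<inter> W \<subseteq> I"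
        using sub unfolding SS_def by blast
      let ?U = "\<Union>CC"
      have "subspace A ?U" unfolding subspace_def
      proof (intro conjI ballI allI)
        show "?U \<subseteq> C" using mem RC by blast
        have "zr \<in> S0" using subspaceD(2) mem[OF S0] by blast
        thus "zr \<in> ?U" using S0 by blast
      next
        fix x y assume "x \<in> ?U" "y \<in> ?U"
        then obtain X Y where XY: "X \<in> CC" "Y \<in> CC" "x \<in> X" "y \<in> Y" by blast
        show "add x y \<in> ?U"
        proof (cases "X \<subseteq> Y")
          case True
          hence "add x y \<in> Y" using subspaceD(3)[of Y x y] mem[OF XY(2)] XY by auto
          thus ?thesis using XY(2) by blast
        next
          case False
          hence "Y \<subseteq> X" using ch XY by blast
          hence "add x y \<in> X" using subspaceD(3)[of X x y] mem[OF XY(1)] XY by auto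
          thus ?thesis using XY(1) by blast
        qed
      next
        fix c x assume "x \<in> ?U"
        then obtain X where X: "X \<in> CC" "x \<in> X" by blast
        hence "sm c x \<in> X" using subspaceD(4)[of X x c] mem[OF X(1)] by auto
        thus "sm c x \<in> ?U" using X by blast
      qed
      moreover have "graded ?U" unfolding graded_def
      proof
        fix x assume "x \<in> ?U"
        then obtain X where X: "X \<in> CC" "x \<in> X" by blast
        hence "graded X" using mem by blast
        then obtain e u where "e \<in> X \<inter> Ev" "u \<in> X \<inter> Od" "x = add e u" using X unfolding graded_def by blast
        thus "\<exists>e\<in>?U \<inter> Ev. \<exists>u\<in>?U \<inter> Od. x = add e u" using X by blast
      qed
      moreover have "I \<subseteq> ?U" using mem[OF S0] S0 by blast
      moreover have "?U \<subseteq> R" using mem by blast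
      moreover have "?U \<inter> W \<subseteq> I" using mem by blast
      ultimately have "?U \<in> SS" unfolding SS_def by blast
      thus ?thesis by blast
    qed
  qed
  from Zorn_Lemma2[OF this] obtain M where M: "M \<in> SS" and maxM0: "\<forall>X\<in>SS. M \<subseteq> X \<longrightarrow> X = M"
    by (elim bexE)
  have maxM: "\<And>X. X \<in> SS \<Longrightarrow> M \<subseteq> X \<Longrightarrow> X = M" using maxM0 by blast
  have Mp: "subspace A M \<and> graded M \<and> I \<subseteq> M \<and> M \<subseteq> R \<and> M \<inter> W \<subseteq> I"
    using M unfolding SS_def by (rule CollectD)
  have sM: "subspace A M" and gM: "graded M" and IM: "I \<subseteq> M" and MR: "M \<subseteq> R" and MW: "M \<inter> W \<subseteq> I"
    using Mp by auto
  have MC: "M \<subseteq> C" using MR RC by blast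
  have WC: "W \<subseteq> C" using subspaceD(1)[OF sW] .
  define MWs where "MWs = {x. \<exists>m\<in>M. \<exists>w\<in>W. x = add m w}"
  have MWs_add: "add x y \<in> MWs" if xy: "x \<in> MWs" "y \<in> MWs" for x y
  proof -
    obtain m1 w1 m2 w2 where h: "m1 \<in> M" "w1 \<in> W" "x = add m1 w1" "m2 \<in> M" "w2 \<in> W" "y = add m2 w2"
      using xy unfolding MWs_def by blast
    have "add x y = add (add m1 m2) (add w1 w2)"
      unfolding h(3,6) by (rule add_4swap) (use h MC WC in auto)
    moreover have "add m1 m2 \<in> M" using subspaceD(3)[OF sM h(1,4)] .
    moreover have "add w1 w2 \<in> W" using subspaceD(3)[OF sW h(2,5)] .
    ultimately show ?thesis unfolding MWs_def by blast
  qed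
  have homog_case: False if r0: "r0 \<in> R" "r0 \<notin> MWs" "r0 \<in> Ev \<or> r0 \<in> Od" for r0
  proof -
    have r0C: "r0 \<in> C" using r0(1) RC by blast
    define M2 where "M2 = {x. \<exists>m\<in>M. \<exists>c. x = add m (sm c r0)}"
    have M2_C: "M2 \<subseteq> C" unfolding M2_def using MC r0C by auto
    have M_M2: "M \<subseteq> M2"
    proof
      fix m assume m: "m \<in> M"
      have "m = add m (sm 0 r0)" using m MC r0C by auto
      thus "m \<in> M2" unfolding M2_def using m by blast
    qed
    have r0M2: "r0 \<in> M2"
    proof -
      have "r0 = add zr (sm 1 r0)" using r0C by simp
      moreover have "zr \<in> M" using subspaceD(2)[OF sM] .
      ultimately show ?thesis unfolding M2_def by blast
    qed
    have r0M: "r0 \<notin> M"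
    proof
      assume "r0 \<in> M"
      moreover have "r0 = add r0 zr" using r0C by simp
      moreover have "zr \<in> W" using subspaceD(2)[OF sW] .
      ultimately have "r0 \<in> MWs" unfolding MWs_def by blast
      thus False using r0(2) by blast
    qed
    have sM2: "subspace A M2" unfolding subspace_def
    proof (intro conjI ballI allI)
      show "M2 \<subseteq> C" by (rule M2_C)
      have "zr \<in> M" using subspaceD(2)[OF sM] .
      thus "zr \<in> M2" using M_M2 by blast
    next
      fix x y assume "x \<in> M2" "y \<in> M2"
      then obtain m1 c1 m2 c2 where h: "m1 \<in> M" "x = add m1 (sm c1 r0)" "m2 \<in> M" "y = add m2 (sm c2 r0)"
        unfolding M2_def by blast
      have "add x y = add (add m1 m2) (add (sm c1 r0) (sm c2 r0))"
        unfolding h(2,4) by (rule add_4swap) (use h MC r0C in auto)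
      also have "add (sm c1 r0) (sm c2 r0) = sm (c1 + c2) r0" using sm_add_left[OF r0C] by simp
      finally have "add x y = add (add m1 m2) (sm (c1 + c2) r0)" .
      moreover have "add m1 m2 \<in> M" using subspaceD(3)[OF sM h(1,3)] .
      ultimately show "add x y \<in> M2" unfolding M2_def by blast
    next
      fix k x assume "x \<in> M2"
      then obtain m c where h: "m \<in> M" "x = add m (sm c r0)" unfolding M2_def by blast
      have "sm k x = add (sm k m) (sm (k * c) r0)" using h MC r0C sm_add_right by auto
      moreover have "sm k m \<in> M" using subspaceD(4)[OF sM h(1)] .
      ultimately show "sm k x \<in> M2" unfolding M2_def by blast
    qed
    have gM2: "graded M2" unfolding graded_def
    proof
      fix x assume "x \<in> M2"
      then obtain m c where h: "m \<in> M" "x = add m (sm c r0)" unfolding M2_def by blast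
      obtain me mo where mm: "me \<in> M" "me \<in> Ev" "mo \<in> M" "mo \<in> Od" "m = add me mo"
        using gM h(1) unfolding graded_def by blast
      have meC: "me \<in> C" "mo \<in> C" using mm MC by auto
      have sC: "sm c r0 \<in> C" using r0C by simp
      have inM2: "add m' (sm c' r0) \<in> M2" if "m' \<in> M" for m' c' unfolding M2_def using that by blast
      have moM2: "mo \<in> M2" "me \<in> M2" using M_M2 mm by auto
      show "\<exists>e\<in>M2 \<inter> Ev. \<exists>u\<in>M2 \<inter> Od. x = add e u"
      proof (cases "r0 \<in> Ev")
        case True
        have "x = add me (add mo (sm c r0))" using h(2) mm(5) meC sC add_assoc by simp
        also have "add mo (sm c r0) = add (sm c r0) mo" using add_comm meC sC by blast
        also have "add me (add (sm c r0) mo) = add (add me (sm c r0)) mo" using add_assoc meC sC by simp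
        finally have "x = add (add me (sm c r0)) mo" .
        moreover have "add me (sm c r0) \<in> M2 \<inter> Ev" using inM2[OF mm(1)] Ev_add[OF mm(2) Ev_sm[OF True]] by blast
        moreover have "mo \<in> M2 \<inter> Od" using moM2 mm(4) by blast
        ultimately show ?thesis by blast
      next
        case False
        hence r0O: "r0 \<in> Od" using r0(3) by blast
        have "x = add me (add mo (sm c r0))" using h(2) mm(5) meC sC add_assoc by simp
        moreover have "add mo (sm c r0) \<in> M2 \<inter> Od" using inM2[OF mm(3)] Od_add[OF mm(4) Od_sm[OF r0O]] by blast
        moreover have "me \<in> M2 \<inter> Ev" using moM2 mm(2) by blast
        ultimately show ?thesis by blast
      qed
    qed
    have M2R: "M2 \<subseteq> R"
    proof
      fix x assume "x \<in> M2"
      then obtain m c where h: "m \<in> M" "x = add m (sm c r0)" unfolding M2_def by blast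
      have "m \<in> R" using h(1) MR by blast
      moreover have "sm c r0 \<in> R" using subspaceD(4)[OF sR r0(1)] .
      ultimately show "x \<in> R" using subspaceD(3)[OF sR] h(2) by simp
    qed
    have M2W: "M2 \<inter> W \<subseteq> I"
    proof
      fix x assume x: "x \<in> M2 \<inter> W"
      then obtain m c where h: "m \<in> M" "x = add m (sm c r0)" unfolding M2_def by blast
      have mC: "m \<in> C" using h MC by blast
      show "x \<in> I"
      proof (cases "c = 0")
        case True
        hence "x = m" using h mC r0C by simp
        thus ?thesis using MW x h by blast
      next
        case False
        let ?ic = "inverse c"
        have "sm ?ic x = add (sm ?ic m) r0" using h mC r0C False sm_add_right by simp
        moreover have xC: "x \<in> C" using x WC by blast
        have z: "add (sm (- ?ic) m) (sm ?ic m) = zr" using sm_add_left[OF mC, of "- ?ic" ?ic] mC by simp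
        have "add (neg (sm ?ic m)) (add (sm ?ic m) r0) = r0"
          using mC r0C z by (simp add: add_assoc[symmetric])
        ultimately have "r0 = add (neg (sm ?ic m)) (sm ?ic x)" by simp
        moreover have "neg (sm ?ic m) \<in> M" using subspaceD(4)[OF sM subspaceD(4)[OF sM h(1)]] .
        moreover have "sm ?ic x \<in> W" using subspaceD(4)[OF sW] x by blast
        ultimately have "r0 \<in> MWs" unfolding MWs_def by blast
        thus ?thesis using r0(2) by blast
      qed
    qed
    have "M2 \<in> SS" unfolding SS_def using sM2 gM2 IM M_M2 M2R M2W by blast
    hence "M2 = M" using maxM M_M2 by blast
    thus False using r0M r0M2 by blast
  qed
  have "\<forall>r\<in>R. r \<in> MWs"
  proof
    fix r assume r: "r \<in> R"
    obtain re ro where rr: "re \<in> R" "re \<in> Ev" "ro \<in> R" "ro \<in> Od" "r = add re ro"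
      using gR r unfolding graded_def by blast
    have "re \<in> MWs" using homog_case[of re] rr by blast
    moreover have "ro \<in> MWs" using homog_case[of ro] rr by blast
    ultimately show "r \<in> MWs" using MWs_add rr(5) by simp
  qed
  thus ?thesis using sM gM IM MR MW unfolding MWs_def by blast
qed

end

lemma (in LSA) right_from_left2:
  assumes sV: "subspace A V" and gU: "graded U" and UC: "U \<subseteq> C"
    and l: "\<And>x u. x \<in> C \<Longrightarrow> u \<in> U \<Longrightarrow> br x u \<in> V"
    and "v \<in> U" "x \<in> C"
  shows "br v x \<in> V"
proof -
  obtain ve vo where v: "ve \<in> U" "ve \<in> Ev" "vo \<in> U" "vo \<in> Od" "v = add ve vo"
    using gU \<open>v \<in> U\<close> unfolding graded_def by blast
  obtain xe xo where x: "xe \<in> Ev" "xo \<in> Od" "x = add xe xo" using decomp \<open>x \<in> C\<close> by blast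
  have h: "br a b \<in> V" if "a \<in> U" "b \<in> C" "br a b = sm c (br b a)" for a b c
  proof -
    have "br b a \<in> V" using l[OF that(2,1)] .
    hence "sm c (br b a) \<in> V" by (rule subspaceD(4)[OF sV])
    thus ?thesis using that(3) by simp
  qed
  have 1: "br ve xe \<in> V" using skew_EvEv[OF v(2) x(1)] h v(1) Ev_C[OF x(1)] by blast
  have 2: "br vo xo \<in> V" using skew_OdOd[OF v(4) x(2)] h v(3) Od_C[OF x(2)] by blast
  have 3: "br ve xo \<in> V" using skew_EvOd[OF v(2) x(2)] h v(1) Od_C[OF x(2)] by blast
  have 4: "br vo xe \<in> V" using skew_OdEv[OF v(4) x(1)] h v(3) Ev_C[OF x(1)] by blast
  have "br v x = add (add (br ve xe) (br vo xo)) (add (br ve xo) (br vo xe))"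
    using br_decomp4 v x by simp
  thus ?thesis using 1 2 3 4 subspaceD(3)[OF sV] by metis
qed

context MAIN begin

lemma I_brs: "r \<in> R \<Longrightarrow> x \<in> Fx.C \<Longrightarrow> Fx.br x r \<in> I"
proof -
  assume "r \<in> R" "x \<in> Fx.C"
  hence "Fx.br x r \<in> Fx.brset Fx.C R" unfolding Fx.brset_def by blast
  thus ?thesis unfolding I_def Fx.lbrs_eq using Fx.lspan_sup by blast
qed

lemma I_brs2: "r \<in> R \<Longrightarrow> x \<in> Fx.C \<Longrightarrow> Fx.br r x \<in> I"
  using Fx.right_from_left2[OF Fx.idealD(1)[OF I_ideal] Fx.idealD(2)[OF R_ideal] R_C I_brs] by blast

lemma key: assumes f: "f \<in> derived F" and af: "\<alpha> f = Tx.zr" shows "f \<in> I"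
proof -
  let ?W = "derived F"
  obtain M where M: "subspace F M" "Fx.graded M" "I \<subseteq> M" "M \<subseteq> R" "M \<inter> ?W \<subseteq> I"
    "\<forall>r\<in>R. \<exists>m\<in>M. \<exists>w\<in>?W. r = Fx.add m w"
    using Fx.complement_exists[OF Fx.idealD(1)[OF R_ideal] Fx.idealD(2)[OF R_ideal]
        Fx.idealD(1)[OF I_ideal] Fx.idealD(2)[OF I_ideal] I_sub_R Fx.derived_subspace] by blast
  have MC: "M \<subseteq> Fx.C" using M(4) R_C by blast
  have Mid: "Fx.ideal M"
  proof (rule Fx.idealI[OF M(1) M(2)])
    fix x v assume "x \<in> Fx.C" "v \<in> M"
    thus "Fx.br x v \<in> M" using I_brs M(3,4) by blast
  qed
  interpret KQ: QUOT F M using Mid by unfold_locales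
  interpret KL: LSA KQ.Q using KQ.Q_lsa by unfold_locales
  interpret KP: HOM F KQ.Q KQ.cs using KQ.proj_hom by unfold_locales
  define lamK where "lamK X = \<pi> (rep X)" for X
  have lamK: "lamK (KQ.cs f) = \<pi> f" if "f \<in> Fx.C" for f
  proof -
    have r: "rep (KQ.cs f) \<in> Fx.C" "Fx.sub (rep (KQ.cs f)) f \<in> M" using KQ.rep_cs[OF that] by auto
    hence "\<pi> (Fx.sub (rep (KQ.cs f)) f) = Lx.zr" using M(4) unfolding R_def lkernel_def by blast
    hence "Lx.sub (\<pi> (rep (KQ.cs f))) (\<pi> f) = Lx.zr" using HP.h_sub r(1) that by simp
    thus ?thesis unfolding lamK_def using HP.h_C r(1) that by simp
  qed
  have Kall: "\<And>P. (\<forall>X\<in>lcarrier KQ.Q. P X) \<longleftrightarrow> (\<forall>f\<in>Fx.C. P (KQ.cs f))" unfolding KQ.Q_carrier by simp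
  have lamK_hom: "lhom KQ.Q L lamK"
    unfolding lhom_def
  proof (intro conjI)
    show "lamK ` lcarrier KQ.Q \<subseteq> Lx.C" unfolding KQ.Q_carrier using lamK HP.h_C by auto
    show "lamK ` leven KQ.Q \<subseteq> Lx.Ev" unfolding KQ.Q_even using lamK HP.h_Ev Fx.Ev_C by auto
    show "lamK ` lodd KQ.Q \<subseteq> Lx.Od" unfolding KQ.Q_odd using lamK HP.h_Od Fx.Od_C by auto
    show "\<forall>x\<in>lcarrier KQ.Q. \<forall>y\<in>lcarrier KQ.Q. lamK (KL.add x y) = Lx.add (lamK x) (lamK y)"
      unfolding Kall using KQ.Q_add lamK HP.h_add by simp
    show "\<forall>c. \<forall>x\<in>lcarrier KQ.Q. lamK (KL.sm c x) = Lx.sm c (lamK x)"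
      unfolding Kall using KQ.Q_sm lamK HP.h_sm by simp
    show "\<forall>x\<in>lcarrier KQ.Q. \<forall>y\<in>lcarrier KQ.Q. lamK (KL.br x y) = Lx.br (lamK x) (lamK y)"
      unfolding Kall using KQ.Q_br lamK HP.h_br by simp
  qed
  interpret HK: HOM KQ.Q L lamK using lamK_hom by unfold_locales
  have lamK_surj: "lamK ` lcarrier KQ.Q = Lx.C"
    unfolding KQ.Q_carrier image_image using lamK surj by (auto intro!: image_cong)
  have derK: "derived KQ.Q = KQ.cs ` derived F" using KP.image_derived[OF KQ.proj_surj] by simp
  have kerK: "lkernel KQ.Q L lamK \<subseteq> derived KQ.Q \<inter> center KQ.Q"
  proof
    fix X assume X: "X \<in> lkernel KQ.Q L lamK"
    then obtain r where r: "r \<in> Fx.C" "X = KQ.cs r" unfolding lkernel_def KQ.Q_carrier by blast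
    have "\<pi> r = Lx.zr" using X r lamK unfolding lkernel_def by simp
    hence rR: "r \<in> R" unfolding R_def lkernel_def using r by simp
    then obtain m w where mw: "m \<in> M" "w \<in> ?W" "r = Fx.add m w" using M(6) by blast
    have mC: "m \<in> Fx.C" "w \<in> Fx.C" using mw MC Fx.derived_C by auto
    have "KQ.cs r = KQ.cs w" using KQ.cs_eq_iff mw mC by (simp add: Fx.add_assoc)
    hence 1: "X \<in> derived KQ.Q" using r mw derK by simp
    have 2: "X \<in> center KQ.Q" unfolding center_def
    proof (intro CollectI conjI ballI)
      show "X \<in> lcarrier KQ.Q" using r KP.h_C by simp
      fix Y assume "Y \<in> lcarrier KQ.Q"
      then obtain g where g: "g \<in> Fx.C" "Y = KQ.cs g" unfolding KQ.Q_carrier by blast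
      have "Fx.br r g \<in> M" using I_brs2[OF rR g(1)] M(3) by blast
      thus "KL.br X Y = KL.zr" using r g KQ.Q_br KQ.Q_zero KQ.cs_zero_iff by simp
    qed
    show "X \<in> derived KQ.Q \<inter> center KQ.Q" using 1 2 by blast
  qed
  have incK: "inC L KQ.Q lamK" unfolding inC_def using KQ.Q_lsa lamK_hom lamK_surj kerK by blast
  have fdK: "fin_dim KQ.Q" using inC_fd[OF Lx.lsa fd incK] .
  obtain gK :: "'f set \<Rightarrow> 'k list" where injK: "inj_on gK KL.C"
    using KL.fd_injection[OF fdK, of "\<lambda>w i. w ! i"] cf_list by blast
  interpret TK: TR KQ.Q gK using injK by unfold_locales
  let ?lt = "lamK \<circ> inv_into KL.C gK"
  have incKt: "inC L TK.Tr ?lt" using TK.inC_transport[OF Lx.lsa incK] .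
  interpret Kt: LSA TK.Tr using TK.Tr_lsa by unfold_locales
  interpret HKt: HOM TK.Tr L ?lt using incKt unfolding inC_def by unfold_locales blast
  obtain \<tau> where tau: "lhom T TK.Tr \<tau>" "\<And>t. t \<in> Tx.C \<Longrightarrow> ?lt (\<tau> t) = \<sigma> t"
    using univ incKt unfolding universal_C_def by blast
  interpret Htau: HOM T TK.Tr \<tau> using tau(1) by unfold_locales
  define \<kappa> where "\<kappa> = gK \<circ> KQ.cs"
  have kap_hom: "lhom F TK.Tr \<kappa>" unfolding \<kappa>_def using lhom_comp[OF KQ.proj_hom TK.Tr_hom] .
  interpret Hk: HOM F TK.Tr \<kappa> using kap_hom by unfold_locales
  have lt_k: "?lt (\<kappa> g) = \<pi> g" if "g \<in> Fx.C" for g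
    unfolding \<kappa>_def using TK.gi[OF KP.h_C[OF that]] lamK[OF that] by simp
  have kerKt: "lkernel TK.Tr L ?lt \<subseteq> center TK.Tr" using incKt unfolding inC_def by blast
  have diff: "Kt.sub (\<tau> (\<alpha> g)) (\<kappa> g) \<in> center TK.Tr" if g: "g \<in> Fx.C" for g
  proof -
    have C: "\<tau> (\<alpha> g) \<in> Kt.C" "\<kappa> g \<in> Kt.C" using Htau.h_C[OF HA.h_C[OF g]] Hk.h_C[OF g] by auto
    have "?lt (Kt.sub (\<tau> (\<alpha> g)) (\<kappa> g)) = Lx.sub (\<sigma> (\<alpha> g)) (\<pi> g)"
      using HKt.h_sub[OF C] tau(2)[OF HA.h_C[OF g]] lt_k[OF g] by simp
    also have "\<dots> = Lx.zr" using alpha(2)[OF g] HP.h_C[OF g] by simp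
    finally show ?thesis using kerKt C unfolding lkernel_def by auto
  qed
  have agree: "\<tau> (\<alpha> g) = \<kappa> g" if g: "g \<in> derived F" for g
    using g
  proof (induction rule: Fx.derived_induct)
    case sub
    show ?case
    proof (rule Fx.subspace_collect)
      show "\<tau> (\<alpha> Fx.zr) = \<kappa> Fx.zr" using HA.h_zero Htau.h_zero Hk.h_zero by simp
    next
      fix a b assume "a \<in> Fx.C" "b \<in> Fx.C" "\<tau> (\<alpha> a) = \<kappa> a" "\<tau> (\<alpha> b) = \<kappa> b"
      thus "\<tau> (\<alpha> (Fx.add a b)) = \<kappa> (Fx.add a b)" using HA.h_add Htau.h_add HA.h_C Hk.h_add by simp
    next
      fix c a assume "a \<in> Fx.C" "\<tau> (\<alpha> a) = \<kappa> a"
      thus "\<tau> (\<alpha> (Fx.sm c a)) = \<kappa> (Fx.sm c a)" using HA.h_sm Htau.h_sm HA.h_C Hk.h_sm by simp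
    qed
  next
    case (gen a b)
    have C: "\<tau> (\<alpha> a) \<in> Kt.C" "\<tau> (\<alpha> b) \<in> Kt.C" "\<kappa> a \<in> Kt.C" "\<kappa> b \<in> Kt.C"
      using Htau.h_C HA.h_C Hk.h_C gen by auto
    have "\<tau> (\<alpha> (Fx.br a b)) = Kt.br (\<tau> (\<alpha> a)) (\<tau> (\<alpha> b))" using HA.h_br Htau.h_br HA.h_C gen by simp
    also have "\<dots> = Kt.br (\<kappa> a) (\<kappa> b)"
      using Kt.br_center_shift[OF C(1) C(3) C(2) C(4) diff[OF gen(1)] diff[OF gen(2)]] .
    also have "\<dots> = \<kappa> (Fx.br a b)" using Hk.h_br gen by simp
    finally show ?case .
  qed
  have fC: "f \<in> Fx.C" using f Fx.derived_C by blast
  have "\<kappa> f = \<kappa> Fx.zr" using agree[OF f] af Htau.h_zero Hk.h_zero by simp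
  hence "gK (KQ.cs f) = gK (KQ.cs Fx.zr)" unfolding \<kappa>_def by simp
  hence "KQ.cs f = KQ.cs Fx.zr" using TK.g_eq KP.h_C fC Fx.zero_closed by metis
  hence "f \<in> M" using KQ.cs_zero_iff fC by simp
  thus ?thesis using M(5) f by blast
qed

lemma main: "isoclinic T (lquot F I)"
proof -
  interpret ISOC F I T \<alpha>
    using I_ideal alpha(1) alpha_surj killI key by unfold_locales auto
  show ?thesis using isoclinic .
qed

end

theorem theorem4p5:
  fixes L :: "('l, 'k::field) lsa"
    and F :: "('f, 'k) lsa"
    and X0 X1 :: "'x set"
    and \<iota> :: "'x \<Rightarrow> 'f"
    and \<pi> :: "'f \<Rightarrow> 'l"
    and T :: "('t, 'k) lsa"
    and \<sigma> :: "'t \<Rightarrow> 'l"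
  assumes "(2::'k) \<noteq> 0" and "(3::'k) \<noteq> 0"
    and "lie_superalgebra L" and "fin_dim L"
    and "free_lsa F X0 X1 \<iota>"
    and "lhom F L \<pi>" and "\<pi> ` lcarrier F = lcarrier L"
    and "universal_C L T \<sigma>"
  shows "isoclinic T (lquot F (lbrs F (lcarrier F) (lkernel F L \<pi>)))"
proof -
  interpret MAIN L F X0 X1 \<iota> \<pi> T \<sigma>
  proof (unfold_locales)
    show "lie_superalgebra L" using assms(3) .
    show "lie_superalgebra F" using assms(5) unfolding free_lsa_def by blast
  qed (use assms in auto)
  show ?thesis using main unfolding I_def R_def .
qed

end
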